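(* Let $\Omega=\{\omega_1,\dots,\omega_K\}$ be a finite set of scenarios with probabilities $p^{\omega_k}>0$, $\sum_k p^{\omega_k}=1$, and base arrival rates $0<\Lambda_0^{\omega_1}<\Lambda_0^{\omega_2}<\dots<\Lambda_0^{\omega_K}$; for $m\in\mathbb{N}$ set $\Lambda_m^{\omega}=m\Lambda_0^\omega$. Let $\bar c:[0,\infty)\to\mathbb{R}$ be continuous and strictly increasing and, for $m\in\mathbb{N}$, $\beta\ge0$, $\omega\in\Omega$, let $c_m(\beta,\omega)=\bar c\big(\Lambda_m^\omega+\beta\sqrt{\Lambda_m^\omega}\big)$. Let $\epsilon\in(0,1)$ and suppose there is an index $i$ with $\sum_{k=i}^K p^{\omega_k}>\epsilon$ and $\sum_{k=i+1}^K p^{\omega_k}<\epsilon$. Problem $F_m$: minimize $c_m(\beta,\omega^{key})$ over $\beta\ge0$, $\omega^{key}\in\Omega$, subject to $$\sum_{\omega\in\Omega}p^\omega\,\bar\alpha\Big(\Lambda_m^{\omega^{key}}+\beta\sqrt{\Lambda_m^{\omega^{key}}},\ \Lambda_m^\omega\Big)\le\epsilon .$$ Let $\mathbf{W}_m$ be the set of $\omega^{key}$ appearing in some optimal solution $(\beta,\omega^{key})$ of $F_m$. Problem $G_m$: minimize $c_m(\beta,\omega_i)$ over $\beta\ge0$ subject to $p^{\omega_i}\,UB(\beta,\Lambda_m^{\omega_i})\le \epsilon-\sum_{k=i+1}^K p^{\omega_k}$, with optimal solution $\beta^G_m$. Then there exists $\bar m$ such that $\omega_i\in\mathbf{W}_m$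 for all $m\ge\bar m$; and, letting $\beta^F_m$ (for $m\ge\bar m$) denote the optimal $\beta$ of $F_m$ when $\omega^{key}=\omega_i$, there is $\beta^*>0$ with $$\lim_{m\to\infty}\beta^G_m=\lim_{m\to\infty}\beta^F_m=\beta^*.$$
   Context: $\phi,\Phi$ are the standard normal density and distribution function. For $\lambda>0$ and real $n\ge 0$, $\bar\alpha(n,\lambda)=\min\Big\{1,\big[\lambda\int_0^\infty t e^{-\lambda t}(1+t)^{n-1}\,dt\big]^{-1}\Big\}$ is the continuous Erlang-C function (the stationary probability that a customer waits in an $M/M/n$ queue with arrival rate $\lambda$ and service rate 1, extended to real $n$; it equals 1 for $n\le\lambda$). For $\lambda>0,\beta\ge 0$ set $n=\lambda+\beta\sqrt{\lambda}$, $\rho=\lambda/n$, $a=\sqrt{-2n(1-\rho+\ln\rho)}$, $\gamma=(n-\lambda)/\sqrt{n}$, and $UB(\beta,\lambda)=\left[\rho+\gamma\left(\frac{\Phi(a)}{\phi(a)}+\frac{2}{3\sqrt{n}}\right)\right]^{-1}$. It is known (Janssen, van Leeuwaarden and Zwart) that $\bar\alpha(\lambda+\beta\sqrt\lambda,\lambda)\le UB(\beta,\lambda)$ for all $\lambda,\beta>0$. The staffing level chosen by a decision $(\beta,\omega^{key})$ is $\Lambda_m^{\omega^{key}}+\beta\sqrt{\Lambda_m^{\omega^{key}}}$, independent of the realized scenario. *)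

theory Defs
  imports "HOL-Probability.Probability"
begin

definition phi_std :: "real \<Rightarrow> real" where
  "phi_std x = std_normal_density x"

definition Phi_std :: "real \<Rightarrow> real" where
  "Phi_std x = (LBINT t:{..x}. std_normal_density t)"

text \<open>Continuous Erlang-C function alpha_bar(n, lambda) (service rate 1).\<close>
definition erlangC :: "real \<Rightarrow> real \<Rightarrow> real" where
  "erlangC n lam = min 1
     (inverse (lam * (LBINT t:{0..}. t * exp (- lam * t) * (1 + t) powr (n - 1))))"

text \<open>Upper bound UB(beta, lambda) of Janssen, van Leeuwaarden and Zwart.\<close>
definition UB :: "real \<Rightarrow> real \<Rightarrow> real" where
  "UB \<beta> lam =
     (let n = lam + \<beta> * sqrt lam;
          \<rho> = lam / n;
          a = sqrt (- 2 * n * (1 - \<rho> + ln \<rho>));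
          \<gamma> = (n - lam) / sqrt n
      in inverse (\<rho> + \<gamma> * (Phi_std a / phi_std a + 2 / (3 * sqrt n))))"

text \<open>Scenarios are indexed by 1..K; arrival rate of scenario k at scale m is m * Lambda0 k.\<close>
definition Lam :: "(nat \<Rightarrow> real) \<Rightarrow> nat \<Rightarrow> nat \<Rightarrow> real" where
  "Lam \<Lambda>0 m k = real m * \<Lambda>0 k"

definition staff :: "(nat \<Rightarrow> real) \<Rightarrow> nat \<Rightarrow> real \<Rightarrow> nat \<Rightarrow> real" where
  "staff \<Lambda>0 m \<beta> k = Lam \<Lambda>0 m k + \<beta> * sqrt (Lam \<Lambda>0 m k)"

definition cost :: "(real \<Rightarrow> real) \<Rightarrow> (nat \<Rightarrow> real) \<Rightarrow> nat \<Rightarrow> real \<Rightarrow> nat \<Rightarrow> real" where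
  "cost cbar \<Lambda>0 m \<beta> k = cbar (staff \<Lambda>0 m \<beta> k)"

definition feasF :: "nat \<Rightarrow> (nat \<Rightarrow> real) \<Rightarrow> (nat \<Rightarrow> real) \<Rightarrow> real \<Rightarrow> nat \<Rightarrow> real \<Rightarrow> nat \<Rightarrow> bool" where
  "feasF K p \<Lambda>0 \<epsilon> m \<beta> k \<longleftrightarrow> \<beta> \<ge> 0 \<and> k \<in> {1..K} \<and>
     (\<Sum>j=1..K. p j * erlangC (staff \<Lambda>0 m \<beta> k) (Lam \<Lambda>0 m j)) \<le> \<epsilon>"

definition optF :: "nat \<Rightarrow> (nat \<Rightarrow> real) \<Rightarrow> (nat \<Rightarrow> real) \<Rightarrow> (real \<Rightarrow> real) \<Rightarrow> real \<Rightarrow> nat \<Rightarrow> real \<Rightarrow> nat \<Rightarrow> bool" where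
  "optF K p \<Lambda>0 cbar \<epsilon> m \<beta> k \<longleftrightarrow> feasF K p \<Lambda>0 \<epsilon> m \<beta> k \<and>
     (\<forall>\<beta>' k'. feasF K p \<Lambda>0 \<epsilon> m \<beta>' k' \<longrightarrow> cost cbar \<Lambda>0 m \<beta> k \<le> cost cbar \<Lambda>0 m \<beta>' k')"

definition Wset :: "nat \<Rightarrow> (nat \<Rightarrow> real) \<Rightarrow> (nat \<Rightarrow> real) \<Rightarrow> (real \<Rightarrow> real) \<Rightarrow> real \<Rightarrow> nat \<Rightarrow> nat set" where
  "Wset K p \<Lambda>0 cbar \<epsilon> m = {k. \<exists>\<beta>. optF K p \<Lambda>0 cbar \<epsilon> m \<beta> k}"

definition feasG :: "nat \<Rightarrow> (nat \<Rightarrow> real) \<Rightarrow> (nat \<Rightarrow> real) \<Rightarrow> real \<Rightarrow> nat \<Rightarrow> nat \<Rightarrow> real \<Rightarrow> bool" where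
  "feasG K p \<Lambda>0 \<epsilon> i m \<beta> \<longleftrightarrow> \<beta> \<ge> 0 \<and>
     p i * UB \<beta> (Lam \<Lambda>0 m i) \<le> \<epsilon> - (\<Sum>k=i+1..K. p k)"

definition optG :: "nat \<Rightarrow> (nat \<Rightarrow> real) \<Rightarrow> (nat \<Rightarrow> real) \<Rightarrow> (real \<Rightarrow> real) \<Rightarrow> real \<Rightarrow> nat \<Rightarrow> nat \<Rightarrow> real \<Rightarrow> bool" where
  "optG K p \<Lambda>0 cbar \<epsilon> i m \<beta> \<longleftrightarrow> feasG K p \<Lambda>0 \<epsilon> i m \<beta> \<and>
     (\<forall>\<beta>'. feasG K p \<Lambda>0 \<epsilon> i m \<beta>' \<longrightarrow> cost cbar \<Lambda>0 m \<beta> i \<le> cost cbar \<Lambda>0 m \<beta>' i)"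

end

theory Submission imports Defs "HOL-Real_Asymp.Real_Asymp" begin


lemma exp_int_k: assumes "l > 0"
  shows "integrable lborel (\<lambda>t. indicator {0..} t * (t^k * exp (-l*t)) :: real)"
proof -
  have "(\<integral>\<^sup>+ x. ennreal (erlang_density 0 l x * x ^ k) \<partial>lborel) < \<infinity>"
    using nn_integral_erlang_ith_moment[OF assms, of 0 k] by simp
  hence "integrable lborel (\<lambda>x. erlang_density 0 l x * x ^ k)"
    by (intro integrableI_nonneg) (auto simp: assms less_imp_le erlang_density_def)
  hence "integrable lborel (\<lambda>x. (1/l) * (erlang_density 0 l x * x ^ k))" by simp
  thus ?thesis
    by (rule Bochner_Integration.integrable_cong[THEN iffD1, rotated -1])
       (use assms in \<open>auto simp: erlang_density_def indicator_def\<close>)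
qed

lemma exp_int0: "l > 0 \<Longrightarrow> integrable lborel (\<lambda>t. indicator {0..} t * exp (-l*t) :: real)"
  using exp_int_k[of l 0] by simp
lemma exp_int1: "l > 0 \<Longrightarrow> integrable lborel (\<lambda>t. indicator {0..} t * (t * exp (-l*t)) :: real)"
  using exp_int_k[of l 1] by simp


lemma ln_le_sqrt: fixes t :: real assumes "t \<ge> 0" shows "ln (1 + t) \<le> 2 * sqrt t"
proof -
  have "ln (1+t) = 2 * ln (sqrt (1+t))" using assms by (simp add: ln_sqrt)
  also have "\<dots> \<le> 2 * (sqrt (1+t) - 1)" using ln_le_minus_one[of "sqrt (1+t)"] assms by simp
  also have "sqrt (1+t) \<le> 1 + sqrt t"
  proof -
    have "1+t \<le> (1+sqrt t)^2" using assms by (simp add: power2_sum)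
    hence "sqrt (1+t) \<le> sqrt ((1+sqrt t)^2)" by (rule real_sqrt_le_mono)
    thus ?thesis using real_sqrt_ge_zero[OF assms] by simp
  qed
  finally show ?thesis by simp
qed


lemma powr_bound: fixes t l n :: real assumes "t \<ge> 0" "l > 0"
  shows "(1+t) powr (n-1) \<le> exp (2 * (max 0 (n-1))^2 / l) * exp (l/2 * t)"
proof -
  define k where "k = max 0 (n-1)"
  have k0: "k \<ge> 0" by (simp add: k_def)
  have bnd: "k * (2 * sqrt t) \<le> 2 * k^2 / l + l/2 * t"
  proof -
    have ts: "sqrt t * sqrt t = t" using assms by simp
    have "0 \<le> (l/2) * (sqrt t - 2*k/l)^2" using assms by simp
    also have "(l/2) * (sqrt t - 2*k/l)^2 = (l/2) * (sqrt t * sqrt t) - 2 * k * sqrt t + 2 * (k * k) / l"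
      using assms by (simp add: power2_eq_square field_simps)
    finally show ?thesis unfolding ts by (simp add: power2_eq_square)
  qed
  have "(1+t) powr (n-1) \<le> (1+t) powr k"
    using assms by (intro powr_mono) (auto simp: k_def)
  also have "\<dots> = exp (k * ln (1+t))" using assms by (simp add: powr_def)
  also have "\<dots> \<le> exp (k * (2 * sqrt t))"
    using ln_le_sqrt[OF assms(1)] k0 by (simp add: mult_left_mono)
  also have "exp (k * (2 * sqrt t)) \<le> exp (2 * k^2 / l + l/2 * t)" using bnd by simp
  finally show ?thesis by (simp add: k_def exp_add)
qed


lemma erl_int: fixes l n :: real assumes "l > 0"
  shows "set_integrable lborel {0..} (\<lambda>t. t * exp (- l * t) * (1 + t) powr (n - 1))"
proof -
  define C where "C = exp (2 * (max 0 (n-1))^2 / l)"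
  have "integrable lborel (\<lambda>t. C * (indicator {0..} t * (t * exp (-(l/2)*t)) :: real))"
    using exp_int1[of "l/2"] assms by simp
  then show ?thesis unfolding set_integrable_def
  proof (rule Bochner_Integration.integrable_bound)
    show "(\<lambda>x. indicat_real {0..} x *\<^sub>R (x * exp (- l * x) * (1 + x) powr (n - 1))) \<in> borel_measurable lborel"
      by measurable
    show "AE x in lborel. norm (indicat_real {0..} x *\<^sub>R (x * exp (- l * x) * (1 + x) powr (n - 1)))
          \<le> norm (C * (indicat_real {0..} x * (x * exp (- (l / 2) * x))))"
    proof (rule AE_I2)
      fix x :: real
      show "norm (indicat_real {0..} x *\<^sub>R (x * exp (- l * x) * (1 + x) powr (n - 1)))
          \<le> norm (C * (indicat_real {0..} x * (x * exp (- (l / 2) * x))))"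
      proof (cases "x \<ge> 0")
        case True
        have "x * exp (- l * x) * (1 + x) powr (n - 1) \<le> x * exp (- l * x) * (C * exp (l/2*x))"
          using powr_bound[OF True assms, of n] True unfolding C_def
          by (intro mult_left_mono) auto
        also have "\<dots> = C * (x * exp (- (l / 2) * x))"
          by (simp add: field_simps flip: exp_add)
        finally show ?thesis using True by (simp add: C_def)
      qed simp
    qed
  qed
qed


lemma Ici_Ioi_int: fixes f :: "real \<Rightarrow> real" shows "(LBINT x:{0..}. f x) = (LBINT x:{0<..}. f x)"
  by (rule set_integral_discrete_difference[where X="{0}"]) (auto simp: le_less)

lemma Ici_Ioi_intble: "set_integrable lborel {0..} f \<longleftrightarrow> set_integrable lborel {0<..} (f :: real \<Rightarrow> real)"
  by (rule set_integrable_discrete_difference[where X="{0}"]) (auto simp: le_less)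

lemma ftc_ray_nonneg:
  fixes f F :: "real \<Rightarrow> real"
  assumes D: "\<And>x. x > 0 \<Longrightarrow> DERIV F x :> f x"
    and C: "\<And>x. x > 0 \<Longrightarrow> isCont f x"
    and N: "\<And>x. x > 0 \<Longrightarrow> f x \<ge> 0"
    and A: "(F \<longlongrightarrow> A) (at_right 0)" and B: "(F \<longlongrightarrow> B) at_top"
  shows "set_integrable lborel {0..} f" "(LBINT x:{0..}. f x) = B - A"
proof -
  have *: "set_integrable lborel (einterval (ereal 0) \<infinity>) f \<and> (LBINT x=ereal 0..\<infinity>. f x) = B - A"
    by (intro conjI interval_integral_FTC_nonneg[where F=F])
       (use D C N A B in \<open>auto simp: ereal_tendsto_simps\<close>)
  thus "set_integrable lborel {0..} f" by (simp add: Ici_Ioi_intble)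
  show "(LBINT x:{0..}. f x) = B - A" using * by (simp add: Ici_Ioi_int interval_integral_to_infinity_eq)
qed

lemma ftc_ray_int:
  fixes f F :: "real \<Rightarrow> real"
  assumes D: "\<And>x. x > 0 \<Longrightarrow> DERIV F x :> f x"
    and C: "\<And>x. x > 0 \<Longrightarrow> isCont f x"
    and I: "set_integrable lborel {0..} f"
    and A: "(F \<longlongrightarrow> A) (at_right 0)" and B: "(F \<longlongrightarrow> B) at_top"
  shows "(LBINT x:{0..}. f x) = B - A"
proof -
  have "(LBINT x=ereal 0..\<infinity>. f x) = B - A"
    by (intro interval_integral_FTC_integrable[where F=F])
       (use D C I A B in \<open>auto simp: ereal_tendsto_simps Ici_Ioi_intble has_real_derivative_iff_has_vector_derivative[symmetric]\<close>)
  thus ?thesis by (simp add: Ici_Ioi_int interval_integral_to_infinity_eq)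
qed

definition Iint :: "real \<Rightarrow> real \<Rightarrow> real" where
  "Iint n l = (LBINT t:{0..}. t * exp (- l * t) * (1 + t) powr (n - 1))"

lemma erlangC_Iint: "erlangC n l = min 1 (inverse (l * Iint n l))"
  by (simp add: erlangC_def Iint_def)

lemma Iint_mono: assumes "l > 0" "n \<le> n'" shows "Iint n l \<le> Iint n' l"
  unfolding Iint_def
proof (rule set_integral_mono[OF erl_int[OF assms(1)] erl_int[OF assms(1)]])
  fix x :: real assume "x \<in> {0..}"
  hence "(1 + x) powr (n - 1) \<le> (1 + x) powr (n' - 1)" using assms by (intro powr_mono) auto
  thus "x * exp (- l * x) * (1 + x) powr (n - 1) \<le> x * exp (- l * x) * (1 + x) powr (n' - 1)"
    using \<open>x \<in> {0..}\<close> by (intro mult_left_mono) auto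
qed

lemma Iint_unit: assumes "l > 0" shows "l * Iint l l = 1"
proof -
  let ?f = "\<lambda>x. l * (x * exp (- l * x) * (1 + x) powr (l - 1))"
  let ?F = "\<lambda>x::real. - ((1 + x) powr l * exp (- l * x))"
  have "(LBINT x:{0..}. ?f x) = 0 - (-1)"
  proof (rule ftc_ray_nonneg(2))
    fix x :: real assume x: "x > 0"
    have e: "(1 + x) powr l = (1+x) * (1 + x) powr (l - 1)"
      using x by (simp add: powr_diff)
    show "DERIV ?F x :> ?f x"
      using x by (auto intro!: derivative_eq_intros simp: e field_simps)
    show "isCont ?f x" using x by (auto intro!: continuous_intros)
    show "?f x \<ge> 0" using x assms by simp
  next
    show "(?F \<longlongrightarrow> -1) (at_right 0)"
      by (rule tendsto_eq_intros | simp)+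
  next
    have "((\<lambda>x. exp (l * (ln (1+x) - x))) \<longlongrightarrow> 0) at_top"
    proof -
      have "filterlim (\<lambda>x::real. ln (1+x) - x) at_bot at_top" by real_asymp
      hence "filterlim (\<lambda>x::real. l * (ln (1+x) - x)) at_bot at_top"
        using assms by (intro filterlim_tendsto_pos_mult_at_bot[OF tendsto_const]) auto
      thus ?thesis by (rule filterlim_compose[OF exp_at_bot])
    qed
    hence "((\<lambda>x. - exp (l * (ln (1+x) - x))) \<longlongrightarrow> - 0) at_top"
      by (rule tendsto_minus)
    hence "((\<lambda>x. - exp (l * (ln (1+x) - x))) \<longlongrightarrow> 0) at_top" by simp
    thus "(?F \<longlongrightarrow> 0) at_top"
    proof (rule tendsto_cong[THEN iffD1, rotated])
      show "\<forall>\<^sub>F x in at_top. - exp (l * (ln (1 + x) - x)) = ?F x"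
        using eventually_gt_at_top[of 0]
        by eventually_elim (simp add: powr_def algebra_simps exp_diff exp_minus field_simps)
    qed
  qed
  hence "(LBINT x:{0..}. ?f x) = 1" by simp
  thus ?thesis unfolding Iint_def by simp
qed


lemma Iint_pos: assumes "l > 0" shows "Iint n l > 0"
proof -
  define c where "c = exp (-2*l) * min (2 powr (n-1)) (3 powr (n-1))"
  have c0: "c > 0" by (simp add: c_def)
  have "integral\<^sup>L lborel (\<lambda>x::real. c * indicator {1..2::real} x :: real) \<le>
        integral\<^sup>L lborel (\<lambda>x. indicator {0..} x *\<^sub>R (x * exp (- l * x) * (1 + x) powr (n - 1)))"
  proof (rule integral_mono)
    show "integrable lborel (\<lambda>x::real. c * indicator {1..2::real} x :: real)" by simp
    show "integrable lborel (\<lambda>x. indicator {0..} x *\<^sub>R (x * exp (- l * x) * (1 + x) powr (n - 1)))"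
      using erl_int[OF assms, of n] unfolding set_integrable_def .
    fix x :: real
    show "c * indicator {1..2} x \<le> indicator {0..} x *\<^sub>R (x * exp (- l * x) * (1 + x) powr (n - 1))"
    proof (cases "x \<in> {1..2}")
      case True
      have p: "min (2 powr (n-1)) (3 powr (n-1)) \<le> (1 + x) powr (n - 1)"
      proof (cases "n - 1 \<ge> 0")
        case True thus ?thesis using \<open>x \<in> {1..2}\<close> by (intro min.coboundedI1 powr_mono2) auto
      next
        case False thus ?thesis using \<open>x \<in> {1..2}\<close> by (intro min.coboundedI2 powr_mono2') auto
      qed
      have e: "exp (-2*l) \<le> exp (- l * x)" using True assms by simp
      have "c \<le> 1 * exp (- l * x) * (1 + x) powr (n - 1)"
        unfolding c_def using e p by (simp add: mult_mono)
      also have "\<dots> \<le> x * exp (- l * x) * (1 + x) powr (n - 1)"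
        using True by (intro mult_right_mono) auto
      finally show ?thesis using True by simp
    next
      case False thus ?thesis by (auto simp: indicator_def)
    qed
  qed
  hence "c \<le> Iint n l" by (simp add: Iint_def set_lebesgue_integral_def)
  thus ?thesis using c0 by simp
qed

lemma erlangC_one: assumes "l > 0" "n \<le> l" shows "erlangC n l = 1"
proof -
  have "l * Iint n l \<le> l * Iint l l" using Iint_mono[OF assms(1,2)] assms by simp
  hence "l * Iint n l \<le> 1" using Iint_unit[OF assms(1)] by simp
  moreover have "l * Iint n l > 0" using Iint_pos[OF assms(1)] assms by simp
  ultimately have "inverse (l * Iint n l) \<ge> 1" by (intro one_le_inverse)
  thus ?thesis by (simp add: erlangC_Iint)
qed

lemma erlangC_antimono: assumes "l > 0" "n \<le> n'" shows "erlangC n' l \<le> erlangC n l"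
proof -
  have "l * Iint n l \<le> l * Iint n' l" using Iint_mono[OF assms] assms by simp
  moreover have "l * Iint n l > 0" using Iint_pos[OF assms(1)] assms by simp
  ultimately have "inverse (l * Iint n' l) \<le> inverse (l * Iint n l)" by (rule le_imp_inverse_le)
  thus ?thesis by (simp add: erlangC_Iint min.coboundedI2)
qed

lemma erlangC_nonneg: assumes "l > 0" shows "0 \<le> erlangC n l"
  using Iint_pos[OF assms, of n] assms by (simp add: erlangC_Iint)

lemma erlangC_le1: "erlangC n l \<le> 1"
  by (simp add: erlangC_Iint)


lemma setint_lower:
  fixes f :: "real \<Rightarrow> real"
  assumes I: "set_integrable lborel {0..} f" and N: "\<And>x. x \<ge> 0 \<Longrightarrow> f x \<ge> 0"
    and L: "\<And>x. x \<in> {1..2} \<Longrightarrow> c \<le> f x"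
  shows "c \<le> (LBINT x:{0..}. f x)"
proof -
  have "integral\<^sup>L lborel (\<lambda>x::real. c * indicator {1..2::real} x :: real) \<le>
        integral\<^sup>L lborel (\<lambda>x. indicator {0..} x *\<^sub>R f x)"
  proof (rule integral_mono)
    show "integrable lborel (\<lambda>x::real. c * indicator {1..2::real} x :: real)" by simp
    show "integrable lborel (\<lambda>x. indicator {0..} x *\<^sub>R f x)" using I unfolding set_integrable_def .
    fix x :: real
    show "c * indicator {1..2} x \<le> indicator {0..} x *\<^sub>R f x"
      using L[of x] N[of x] by (auto simp: indicator_def)
  qed
  thus ?thesis by (simp add: set_lebesgue_integral_def)
qed

lemma cont_param:
  fixes f :: "real \<Rightarrow> real \<Rightarrow> real" and S :: "real set" and w :: "real \<Rightarrow> real"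
  assumes I: "\<And>p. p \<in> S \<Longrightarrow> set_integrable lborel {0..} (f p)"
    and W: "set_integrable lborel {0..} w"
    and B: "\<And>p x. p \<in> S \<Longrightarrow> x \<ge> 0 \<Longrightarrow> \<bar>f p x\<bar> \<le> w x"
    and C: "\<And>x. x \<ge> 0 \<Longrightarrow> continuous_on S (\<lambda>p. f p x)"
  shows "continuous_on S (\<lambda>p. LBINT x:{0..}. f p x)"
  unfolding continuous_on_eq_continuous_within
proof
  fix a assume a: "a \<in> S"
  show "continuous (at a within S) (\<lambda>p. LBINT x:{0..}. f p x)"
  proof (rule continuous_within_sequentiallyI)
    fix u :: "nat \<Rightarrow> real" assume u: "u \<longlonglongrightarrow> a" "\<forall>n. u n \<in> S"
    show "(\<lambda>n. LBINT x:{0..}. f (u n) x) \<longlonglongrightarrow> (LBINT x:{0..}. f a x)"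
      unfolding set_lebesgue_integral_def
    proof (rule integral_dominated_convergence[where w="\<lambda>x. indicator {0..} x *\<^sub>R w x"])
      show "(\<lambda>x. indicat_real {0..} x *\<^sub>R f a x) \<in> borel_measurable lborel"
        using I[OF a] unfolding set_integrable_def by (rule borel_measurable_integrable)
      show "(\<lambda>x. indicat_real {0..} x *\<^sub>R f (u i) x) \<in> borel_measurable lborel" for i
        using I[of "u i"] u(2) unfolding set_integrable_def by (simp add: borel_measurable_integrable)
      show "integrable lborel (\<lambda>x. indicat_real {0..} x *\<^sub>R w x)"
        using W unfolding set_integrable_def .
      show "AE x in lborel. (\<lambda>i. indicat_real {0..} x *\<^sub>R f (u i) x) \<longlonglongrightarrow> indicat_real {0..} x *\<^sub>R f a x"
      proof (rule AE_I2)
        fix x :: real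
        show "(\<lambda>i. indicat_real {0..} x *\<^sub>R f (u i) x) \<longlonglongrightarrow> indicat_real {0..} x *\<^sub>R f a x"
        proof (cases "x \<ge> 0")
          case True
          have "(\<lambda>i. f (u i) x) \<longlonglongrightarrow> f a x"
            using continuous_on_tendsto_compose[OF C[OF True] u(1) a] u(2) by simp
          thus ?thesis using True by simp
        qed simp
      qed
      show "AE x in lborel. norm (indicat_real {0..} x *\<^sub>R f (u i) x) \<le> indicat_real {0..} x *\<^sub>R w x" for i
      proof (rule AE_I2)
        fix x :: real
        show "norm (indicat_real {0..} x *\<^sub>R f (u i) x) \<le> indicat_real {0..} x *\<^sub>R w x"
          using B[of "u i" x] u(2) by (cases "x \<ge> 0") auto
      qed
    qed
  qed
qed

definition H :: "real \<Rightarrow> real" where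
  "H b = (LBINT s:{0..}. exp (b * s - s^2 / 2))"

definition M :: "real \<Rightarrow> real" where
  "M b = (LBINT s:{0..}. s * exp (b * s - s^2 / 2))"

lemma gauss_bound: fixes b s :: real shows "b * s - s^2/2 \<le> (b+1)^2/2 - s"
proof -
  have "0 \<le> (s - (b+1))^2 / 2" by simp
  thus ?thesis by (simp add: power2_eq_square field_simps)
qed

lemma H_int: fixes b :: real shows "set_integrable lborel {0..} (\<lambda>s. exp (b * s - s^2 / 2))"
proof -
  have "integrable lborel (\<lambda>t. exp ((b+1)^2/2) * (indicator {0..} t * exp (- 1 * t)) :: real)"
    using exp_int0[of 1] by simp
  thus ?thesis unfolding set_integrable_def
  proof (rule Bochner_Integration.integrable_bound)
    show "(\<lambda>x. indicat_real {0..} x *\<^sub>R exp (b * x - x\<^sup>2 / 2)) \<in> borel_measurable lborel" by measurable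
    show "AE x in lborel. norm (indicat_real {0..} x *\<^sub>R exp (b * x - x\<^sup>2 / 2))
        \<le> norm (exp ((b + 1)\<^sup>2 / 2) * (indicat_real {0..} x * exp (- 1 * x)))"
      by (rule AE_I2) (auto simp: indicator_def gauss_bound exp_add[symmetric])
  qed
qed

lemma M_int: fixes b :: real shows "set_integrable lborel {0..} (\<lambda>s. s * exp (b * s - s^2 / 2))"
proof -
  have "integrable lborel (\<lambda>t. exp ((b+1)^2/2) * (indicator {0..} t * (t * exp (- 1 * t))) :: real)"
    using exp_int1[of 1] by simp
  thus ?thesis unfolding set_integrable_def
  proof (rule Bochner_Integration.integrable_bound)
    show "(\<lambda>x. indicat_real {0..} x *\<^sub>R (x * exp (b * x - x\<^sup>2 / 2))) \<in> borel_measurable lborel" by measurable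
    show "AE x in lborel. norm (indicat_real {0..} x *\<^sub>R (x * exp (b * x - x\<^sup>2 / 2)))
        \<le> norm (exp ((b + 1)\<^sup>2 / 2) * (indicat_real {0..} x * (x * exp (- 1 * x))))"
    proof (rule AE_I2)
      fix x :: real
      have "exp (b * x - x\<^sup>2 / 2) \<le> exp ((b + 1)\<^sup>2 / 2) * exp (- 1 * x)"
        using gauss_bound[of b x] by (simp add: exp_add[symmetric])
      thus "norm (indicat_real {0..} x *\<^sub>R (x * exp (b * x - x\<^sup>2 / 2)))
        \<le> norm (exp ((b + 1)\<^sup>2 / 2) * (indicat_real {0..} x * (x * exp (- 1 * x))))"
        by (cases "x \<ge> 0") (auto simp: indicator_def mult_left_mono mult.left_commute)
    qed
  qed
qed

lemma M_eq: "M b = 1 + b * H b"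
proof -
  let ?f = "\<lambda>s. (s - b) * exp (b * s - s^2 / 2)"
  let ?F = "\<lambda>s. - exp (b * s - s^2 / 2)"
  have "(LBINT s:{0..}. ?f s) = 0 - (-1)"
  proof (rule ftc_ray_int)
    fix x :: real
    show "DERIV ?F x :> ?f x" by (auto intro!: derivative_eq_intros simp: field_simps power2_eq_square)
    show "isCont ?f x" by (auto intro!: continuous_intros)
  next
    have "set_integrable lborel {0..} (\<lambda>s. s * exp (b * s - s^2 / 2) - b * exp (b * s - s^2 / 2))"
      using M_int[of b] H_int[of b] by (intro set_integral_diff) auto
    thus "set_integrable lborel {0..} ?f" by (simp add: algebra_simps)
    show "(?F \<longlongrightarrow> -1) (at_right 0)" by (rule tendsto_eq_intros | simp)+
    show "(?F \<longlongrightarrow> 0) at_top" by real_asymp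
  qed
  also have "(LBINT s:{0..}. ?f s) = (LBINT s:{0..}. s * exp (b * s - s^2 / 2) - b * exp (b * s - s^2 / 2))"
    by (simp add: algebra_simps)
  also have "\<dots> = M b - b * H b"
    using M_int[of b] H_int[of b] by (simp add: M_def H_def set_integral_diff)
  finally show ?thesis by simp
qed


lemma H_mono: assumes "b \<le> b'" shows "H b \<le> H b'"
  unfolding H_def
proof (rule set_integral_mono[OF H_int H_int])
  fix x :: real assume "x \<in> {0..}"
  thus "exp (b * x - x\<^sup>2 / 2) \<le> exp (b' * x - x\<^sup>2 / 2)" using assms by (simp add: mult_right_mono)
qed

lemma H_pos: "H b > 0"
proof -
  have "exp (- 2 * \<bar>b\<bar> - 2) \<le> H b" unfolding H_def
  proof (rule setint_lower[OF H_int])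
    fix x :: real assume x: "x \<in> {1..2}"
    have "- 2 * \<bar>b\<bar> \<le> b * x"
    proof (cases "b \<ge> 0")
      case True
      have "0 \<le> b*x" using True x by simp
      thus ?thesis using True by linarith
    next
      case False
      hence "b * x \<ge> b * 2" using x by (intro mult_left_mono_neg) auto
      thus ?thesis using False by simp
    qed
    moreover have "x^2 \<le> 4" using x by (simp add: power2_eq_square) (metis mult_mono' order_trans x atLeastAtMost_iff mult_2 numeral_Bit0 order_refl zero_le_one add_mono one_add_one)
    ultimately show "exp (- 2 * \<bar>b\<bar> - 2) \<le> exp (b * x - x\<^sup>2 / 2)" by simp
  qed simp
  thus ?thesis by (meson exp_gt_zero less_le_trans)
qed

lemma H_cont_on: "continuous_on {-B..B} H"
proof -
  have "continuous_on {-B..B} (\<lambda>p. LBINT s:{0..}. exp (p * s - s^2 / 2))"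
  proof (rule cont_param[where w="\<lambda>s. exp (B * s - s^2 / 2)"])
    show "set_integrable lborel {0..} (\<lambda>s. exp (p * s - s^2 / 2))" for p :: real using H_int .
    show "set_integrable lborel {0..} (\<lambda>s. exp (B * s - s^2 / 2))" using H_int .
    show "\<bar>exp (p * x - x^2 / 2)\<bar> \<le> exp (B * x - x^2 / 2)" if "p \<in> {-B..B}" "x \<ge> 0" for p x :: real
      using that by (simp add: mult_right_mono)
    show "continuous_on {-B..B} (\<lambda>p. exp (p * x - x^2 / 2))" for x
      by (intro continuous_intros)
  qed
  thus ?thesis by (simp add: H_def[abs_def])
qed

lemma H_isCont: "isCont H b"
proof -
  have "continuous_on {-(\<bar>b\<bar>+1)..\<bar>b\<bar>+1} H" by (rule H_cont_on)
  moreover have "b \<in> interior {-(\<bar>b\<bar>+1)..\<bar>b\<bar>+1}" by auto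
  ultimately show ?thesis using continuous_on_interior by blast
qed

lemma M_isCont: "isCont M b"
  unfolding M_eq[abs_def] by (intro continuous_intros H_isCont)

lemma M_zero: "M 0 = 1" by (simp add: M_eq)

lemma M_strict: assumes "0 \<le> b" "b < b'" shows "M b < M b'"
proof -
  have "b * H b < b' * H b" using H_pos[of b] assms by simp
  also have "\<dots> \<le> b' * H b'" using H_mono[of b b'] assms by (intro mult_left_mono) auto
  finally show ?thesis by (simp add: M_eq)
qed

lemma M_ge1: assumes "0 \<le> b" shows "1 \<le> M b"
  using M_strict[of 0 b] assms M_zero by (cases "b = 0") auto

lemma M_lower: assumes "0 \<le> b" shows "1 + b * H 0 \<le> M b"
  using H_mono[of 0 b] assms by (simp add: M_eq mult_left_mono)

lemma Phi_H: "Phi_std b = phi_std b * H b"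
proof -
  have "Phi_std b = integral\<^sup>L lborel (\<lambda>t. indicator {..b} t *\<^sub>R std_normal_density t)"
    by (simp add: Phi_std_def set_lebesgue_integral_def)
  also have "\<dots> = \<bar>-1\<bar> *\<^sub>R integral\<^sup>L lborel (\<lambda>x. indicator {..b} (b + (-1) * x) *\<^sub>R std_normal_density (b + (-1) * x))"
    by (rule lborel_integral_real_affine) simp
  also have "\<dots> = integral\<^sup>L lborel (\<lambda>x. phi_std b * (indicator {0..} x *\<^sub>R exp (b * x - x^2 / 2)))"
  proof -
    have "indicator {..b} (b + (-1) * x) *\<^sub>R std_normal_density (b + (-1) * x) =
          phi_std b * (indicator {0..} x *\<^sub>R exp (b * x - x^2 / 2))" for x :: real
    proof -
      have "exp (- (b + - 1 * x)\<^sup>2 / 2) = exp (- b\<^sup>2/2) * exp (b * x - x\<^sup>2 / 2)"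
        by (simp add: exp_add[symmetric] power2_eq_square field_simps)
      thus ?thesis by (simp add: phi_std_def std_normal_density_def indicator_def)
    qed
    thus ?thesis by simp
  qed
  also have "\<dots> = phi_std b * H b"
    by (simp add: H_def set_lebesgue_integral_def)
  finally show ?thesis .
qed

lemma phi_pos: "phi_std b > 0"
  by (simp add: phi_std_def normal_density_pos)

lemma phi_isCont: "isCont phi_std b"
  unfolding phi_std_def[abs_def] std_normal_density_def by (intro continuous_intros) auto

lemma Phi_div_phi: "Phi_std b / phi_std b = H b"
  using phi_pos[of b] by (simp add: Phi_H)


lemma ln_upper: fixes u :: real assumes "u \<ge> 0" shows "ln (1 + u) \<le> u - u^2 / (2 * (1 + u))"
proof -
  let ?g = "\<lambda>u::real. u - u^2 / (2 * (1 + u)) - ln (1 + u)"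
  have "?g 0 \<le> ?g u"
  proof (rule DERIV_nonneg_imp_nondecreasing[OF assms])
    fix x :: real assume x: "0 \<le> x" "x \<le> u"
    have p: "1 + x > 0" using x by auto
    have d: "(2 + 2 * x) * (2 + 2 * x) = 4 * (1 + x)^2" by (simp add: power2_eq_square algebra_simps)
    have e: "1 - (2 * x * (2 + 2 * x) - x\<^sup>2 * 2) / ((2 + 2 * x) * (2 + 2 * x)) - 1 / (1 + x) = x\<^sup>2 / (2 * (1 + x)\<^sup>2)"
      using p unfolding d by (simp add: divide_simps) (simp add: algebra_simps power2_eq_square)
    have "DERIV ?g x :> x^2 / (2 * (1 + x)^2)"
      using x by (auto intro!: derivative_eq_intros simp: e)
    thus "\<exists>y. DERIV ?g x :> y \<and> y \<ge> 0" by (intro exI[of _ "x^2 / (2 * (1 + x)^2)"]) simp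
  qed
  thus ?thesis by simp
qed

lemma expo_lim: fixes x b :: real
  shows "((\<lambda>l. - sqrt l * x + (l + b * sqrt l - 1) * ln (1 + x / sqrt l)) \<longlongrightarrow> b * x - x * x / 2) at_top"
  by real_asymp

lemma pw: fixes x b :: real assumes "x \<ge> 0"
  shows "((\<lambda>l. x * exp (- sqrt l * x) * (1 + x / sqrt l) powr (l + b * sqrt l - 1)) \<longlongrightarrow> x * exp (b * x - x^2 / 2)) at_top"
proof -
  have "((\<lambda>l. x * exp (- sqrt l * x + (l + b * sqrt l - 1) * ln (1 + x / sqrt l))) \<longlongrightarrow> x * exp (b * x - x * x / 2)) at_top"
    by (intro tendsto_mult tendsto_const tendsto_exp expo_lim)
  hence "((\<lambda>l. x * exp (- sqrt l * x + (l + b * sqrt l - 1) * ln (1 + x / sqrt l))) \<longlongrightarrow> x * exp (b * x - x^2 / 2)) at_top"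
    by (simp add: power2_eq_square)
  thus ?thesis
  proof (rule tendsto_cong[THEN iffD1, rotated])
    show "\<forall>\<^sub>F l in at_top. x * exp (- sqrt l * x + (l + b * sqrt l - 1) * ln (1 + x / sqrt l)) =
       x * exp (- sqrt l * x) * (1 + x / sqrt l) powr (l + b * sqrt l - 1)"
      using eventually_gt_at_top[of 0]
    proof eventually_elim
      case (elim l)
      have "1 + x / sqrt l > 0" using elim assms by (simp add: add_pos_nonneg)
      hence "(1 + x / sqrt l) powr (l + b * sqrt l - 1) = exp ((l + b * sqrt l - 1) * ln (1 + x / sqrt l))"
        by (simp add: powr_def)
      thus ?case by (simp only: exp_add mult.assoc)
    qed
  qed
qed

lemma dom_bound:
  fixes b l x :: real
  assumes b: "b \<ge> 0" and l: "l \<ge> 2" and lb: "sqrt l \<ge> 8 * (b + 1)" and x: "x \<ge> 0"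
  shows "x * exp (- sqrt l * x) * (1 + x / sqrt l) powr (l + b * sqrt l - 1)
         \<le> exp (2 * (b + 2)^2) * exp (- x) + x * exp (- x)"
proof -
  define r where "r = sqrt l"
  have r0: "r > 0" using l by (simp add: r_def)
  have rr: "r * r = l" using l by (simp add: r_def)
  define u where "u = x / r"
  have u0: "u \<ge> 0" using x r0 by (simp add: u_def)
  define e where "e = l + b * r - 1"
  have "b * r \<ge> 0" using b r0 by simp
  hence e1: "e \<ge> l / 2" using l by (simp add: e_def)
  have e0: "e \<ge> 0" using e1 l by simp
  define E where "E = - r * x + e * ln (1 + u)"
  have "(1+u) powr e = exp (e * ln (1+u))" using u0 by (simp add: powr_def)
  hence pw: "x * exp (- r * x) * (1 + u) powr e = x * exp E"
    unfolding E_def by (simp only: exp_add mult.assoc)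
  have A1: "e * ln (1 + u) \<le> e * (u - u^2 / (2 * (1 + u)))"
    using ln_upper[OF u0] e0 by (rule mult_left_mono)
  have A2: "e * u \<le> r * x + b * x"
  proof -
    have "e * u = (r * r + b * r - 1) * x / r" unfolding e_def u_def rr by simp
    also have "\<dots> = r * x + b * x - x / r" using r0 by (simp add: field_simps)
    also have "\<dots> \<le> r * x + b * x" using x r0 by simp
    finally show ?thesis .
  qed
  have A3: "e * (u^2 / (2 * (1 + u))) \<ge> (l / 2) * (u^2 / (2 * (1 + u)))"
    using e1 u0 by (intro mult_right_mono) auto
  have A4: "(l / 2) * (u^2 / (2 * (1 + u))) = x^2 / (4 * (1 + u))"
  proof -
    have rx: "r * 4 + x * 4 > 0" "r * (r * 4) + r * (x * 4) > 0" using r0 x by (simp_all add: add_pos_nonneg)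
    show ?thesis
      unfolding u_def using r0 rx by (simp add: rr[symmetric] power2_eq_square field_simps)
  qed
  have "e * ln (1 + u) \<le> r * x + b * x - x^2 / (4 * (1 + u))"
    using A1 A2 A3 A4 unfolding right_diff_distrib by linarith
  hence Eb: "E \<le> b * x - x^2 / (4 * (1 + u))" unfolding E_def by simp
  have "x * exp E \<le> exp (2 * (b + 2)^2) * exp (- x) + x * exp (- x)"
  proof (cases "u \<le> 1")
    case True
    have "x^2 / 8 \<le> x^2 / (4 * (1 + u))" using True u0 by (intro divide_left_mono) auto
    hence "E \<le> b * x - x^2 / 8" using Eb by linarith
    hence "x * exp E \<le> x * exp (b * x - x^2 / 8)" using x by (intro mult_left_mono) auto
    also have "\<dots> \<le> exp x * exp (b * x - x^2 / 8)"
    proof (rule mult_right_mono)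
      show "x \<le> exp x" using exp_ge_add_one_self[of x] by linarith
    qed simp
    also have "\<dots> = exp ((b + 2) * x - x^2 / 8) * exp (- x)"
      by (simp add: exp_add[symmetric] algebra_simps)
    also have "\<dots> \<le> exp (2 * (b + 2)^2) * exp (- x)"
    proof -
      have "0 \<le> (x - 4 * (b + 2))^2 / 8" by simp
      hence "(b + 2) * x - x^2 / 8 \<le> 2 * (b + 2)^2" by (simp add: power2_eq_square field_simps)
      thus ?thesis by simp
    qed
    finally have "x * exp E \<le> exp (2 * (b + 2)^2) * exp (- x)" .
    moreover have "0 \<le> x * exp (- x)" using x by simp
    ultimately show ?thesis by linarith
  next
    case False
    have "1 + u \<le> 2 * u" using False by simp
    hence "x^2 / (4 * (2 * u)) \<le> x^2 / (4 * (1 + u))" using u0 False by (intro divide_left_mono) auto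
    moreover have "x^2 / (4 * (2 * u)) = x * r / 8"
      using False r0 unfolding u_def by (auto simp: power2_eq_square field_simps)
    moreover have "x * r / 8 \<ge> x * (b + 1)"
    proof -
      have "x * (8 * (b + 1)) \<le> x * r" using lb x unfolding r_def by (intro mult_left_mono) auto
      thus ?thesis by (simp add: algebra_simps)
    qed
    moreover have "x * (b + 1) = b * x + x" by (simp add: algebra_simps)
    ultimately have "E \<le> - x" using Eb by linarith
    hence "x * exp E \<le> x * exp (- x)" using x by (intro mult_left_mono) auto
    thus ?thesis by (simp add: add_increasing)
  qed
  moreover have "x * exp (- sqrt l * x) * (1 + x / sqrt l) powr (l + b * sqrt l - 1) = x * exp E"
    using pw by (simp only: r_def u_def e_def)
  ultimately show ?thesis by linarith
qed


lemma Iint_subst: assumes "l > 0"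
  shows "l * Iint n l = (LBINT s:{0..}. s * exp (- sqrt l * s) * (1 + s / sqrt l) powr (n - 1))"
proof -
  let ?g = "\<lambda>t. indicator {0..} t *\<^sub>R (t * exp (- l * t) * (1 + t) powr (n - 1)) :: real"
  let ?h = "\<lambda>x. indicator {0..} x *\<^sub>R (x * exp (- sqrt l * x) * (1 + x / sqrt l) powr (n - 1)) :: real"
  have c: "1 / sqrt l \<noteq> 0" using assms by simp
  have sl: "sqrt l > 0" using assms by simp
  have "Iint n l = integral\<^sup>L lborel ?g" by (simp add: Iint_def set_lebesgue_integral_def)
  also have "\<dots> = \<bar>1 / sqrt l\<bar> *\<^sub>R integral\<^sup>L lborel (\<lambda>x. ?g (0 + 1 / sqrt l * x))"
    by (rule lborel_integral_real_affine[OF c])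
  also have "(\<lambda>x. ?g (0 + 1 / sqrt l * x)) = (\<lambda>x. (1 / sqrt l) * ?h x)"
  proof
    fix x :: real
    have i: "indicator {0..} (x / sqrt l) = (indicator {0..} x :: real)"
      using sl by (simp add: indicator_def zero_le_divide_iff)
    have e: "l * (x / sqrt l) = sqrt l * x"
      using assms sl by (simp add: field_simps real_sqrt_mult_self[symmetric] del: real_sqrt_mult_self)
         (metis real_sqrt_pow2 less_imp_le power2_eq_square)
    show "?g (0 + 1 / sqrt l * x) = (1 / sqrt l) * ?h x"
      using i e by (simp add: mult_ac)
  qed
  also have "\<bar>1 / sqrt l\<bar> *\<^sub>R integral\<^sup>L lborel (\<lambda>x. (1 / sqrt l) * ?h x) = (1 / l) * integral\<^sup>L lborel ?h"
    using assms sl by (simp add: abs_of_pos)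
  finally show ?thesis using assms by (simp add: set_lebesgue_integral_def)
qed


lemma lim_main: fixes b :: real assumes b: "b \<ge> 0"
  shows "((\<lambda>l. l * Iint (l + b * sqrt l) l) \<longlongrightarrow> M b) at_top"
proof -
  let ?s = "\<lambda>l x. indicator {0..} x *\<^sub>R (x * exp (- sqrt l * x) * (1 + x / sqrt l) powr (l + b * sqrt l - 1)) :: real"
  let ?f = "\<lambda>x. indicator {0..} x *\<^sub>R (x * exp (b * x - x^2 / 2)) :: real"
  let ?w = "\<lambda>x. indicator {0..} x *\<^sub>R (exp (2 * (b + 2)^2) * exp (- x) + x * exp (- x)) :: real"
  have "((\<lambda>l. integral\<^sup>L lborel (?s l)) \<longlongrightarrow> integral\<^sup>L lborel ?f) at_top"
  proof (rule integral_dominated_convergence_at_top[where w = ?w])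
    show "?f \<in> borel_measurable lborel" by measurable
    show "?s l \<in> borel_measurable lborel" for l by measurable
    have "integrable lborel (\<lambda>x. exp (2 * (b + 2)^2) * (indicator {0..} x * exp (- 1 * x)) + indicator {0..} x * (x * exp (- 1 * x)) :: real)"
      using exp_int0[of 1] exp_int1[of 1] by (intro Bochner_Integration.integrable_add) auto
    thus "integrable lborel ?w"
      by (rule Bochner_Integration.integrable_cong[THEN iffD1, rotated -1]) (auto simp: indicator_def)
    show "AE x in lborel. ((\<lambda>l. ?s l x) \<longlongrightarrow> ?f x) at_top"
    proof (rule AE_I2)
      fix x :: real
      show "((\<lambda>l. ?s l x) \<longlongrightarrow> ?f x) at_top"
      proof (cases "x \<ge> 0")
        case True thus ?thesis using pw[OF True, of b] by simp
      qed simp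
    qed
    show "\<forall>\<^sub>F l in at_top. AE x in lborel. norm (?s l x) \<le> ?w x"
      using eventually_ge_at_top[of "max 2 (64 * (b + 1)^2)"]
    proof eventually_elim
      case (elim l)
      have l2: "l \<ge> 2" using elim by simp
      have "(8 * (b + 1))^2 = 64 * (b + 1)^2" by (simp only: power_mult_distrib) simp
      hence "(8 * (b + 1))^2 \<le> l" using elim by simp
      hence lb: "sqrt l \<ge> 8 * (b + 1)" using b by (simp add: real_le_rsqrt)
      show ?case
      proof (rule AE_I2)
        fix x :: real
        show "norm (?s l x) \<le> ?w x"
        proof (cases "x \<ge> 0")
          case True
          have "0 \<le> x * exp (- sqrt l * x) * (1 + x / sqrt l) powr (l + b * sqrt l - 1)"
            using True by simp
          thus ?thesis using True dom_bound[OF b l2 lb True] by simp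
        qed simp
      qed
    qed
  qed
  hence "((\<lambda>l. LBINT s:{0..}. s * exp (- sqrt l * s) * (1 + s / sqrt l) powr (l + b * sqrt l - 1)) \<longlongrightarrow> M b) at_top"
    by (simp add: M_def set_lebesgue_integral_def)
  thus ?thesis
  proof (rule tendsto_cong[THEN iffD1, rotated])
    show "\<forall>\<^sub>F l in at_top. (LBINT s:{0..}. s * exp (- sqrt l * s) * (1 + s / sqrt l) powr (l + b * sqrt l - 1))
       = l * Iint (l + b * sqrt l) l"
      using eventually_gt_at_top[of 0] by eventually_elim (simp add: Iint_subst)
  qed
qed

lemma erl_lim: fixes b :: real assumes b: "b \<ge> 0"
  shows "((\<lambda>l. erlangC (l + b * sqrt l) l) \<longlongrightarrow> inverse (M b)) at_top"
proof -
  have M1: "M b \<ge> 1" using M_ge1[OF b] .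
  have "((\<lambda>l. min 1 (inverse (l * Iint (l + b * sqrt l) l))) \<longlongrightarrow> min 1 (inverse (M b))) at_top"
    using M1 by (intro tendsto_min tendsto_const tendsto_inverse lim_main b) auto
  moreover have "min 1 (inverse (M b)) = inverse (M b)" using M1 by (simp add: inverse_le_1_iff)
  ultimately show ?thesis by (simp add: erlangC_Iint)
qed


definition aa :: "real \<Rightarrow> real \<Rightarrow> real" where
  "aa b l = sqrt (- 2 * (l + b * sqrt l) * (1 - l / (l + b * sqrt l) + ln (l / (l + b * sqrt l))))"

definition DD :: "real \<Rightarrow> real \<Rightarrow> real" where
  "DD b l = l / (l + b * sqrt l) + ((l + b * sqrt l) - l) / sqrt (l + b * sqrt l) *
            (H (aa b l) + 2 / (3 * sqrt (l + b * sqrt l)))"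

lemma UB_DD: "UB b l = inverse (DD b l)"
  by (simp only: UB_def Let_def DD_def aa_def Phi_div_phi)

lemma aa_lim: fixes b :: real assumes "b \<ge> 0" shows "((\<lambda>l. aa b l) \<longlongrightarrow> b) at_top"
proof -
  have "((\<lambda>l. - 2 * (l + b * sqrt l) * (1 - l / (l + b * sqrt l) + ln (l / (l + b * sqrt l)))) \<longlongrightarrow> b * b) at_top"
    by real_asymp
  hence "((\<lambda>l. aa b l) \<longlongrightarrow> sqrt (b * b)) at_top" unfolding aa_def by (rule tendsto_real_sqrt)
  thus ?thesis using assms by simp
qed

lemma DD_lim: fixes b :: real assumes b: "b \<ge> 0" shows "((\<lambda>l. DD b l) \<longlongrightarrow> M b) at_top"
proof -
  have 1: "((\<lambda>l. l / (l + b * sqrt l)) \<longlongrightarrow> 1) at_top" by real_asymp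
  have 2: "((\<lambda>l. ((l + b * sqrt l) - l) / sqrt (l + b * sqrt l)) \<longlongrightarrow> b) at_top" by real_asymp
  have 3: "((\<lambda>l. 2 / (3 * sqrt (l + b * sqrt l))) \<longlongrightarrow> 0) at_top" by real_asymp
  have 4: "((\<lambda>l. H (aa b l)) \<longlongrightarrow> H b) at_top"
    by (rule isCont_tendsto_compose[OF H_isCont aa_lim[OF b]])
  have "((\<lambda>l. DD b l) \<longlongrightarrow> 1 + b * (H b + 0)) at_top"
    unfolding DD_def by (intro tendsto_add tendsto_mult 1 2 3 4)
  thus ?thesis by (simp add: M_eq)
qed

lemma UB_lim: fixes b :: real assumes b: "b \<ge> 0" shows "((\<lambda>l. UB b l) \<longlongrightarrow> inverse (M b)) at_top"
  unfolding UB_DD using M_ge1[OF b] by (intro tendsto_inverse DD_lim b) auto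


lemma DD_pos: assumes l: "l > 0" and b: "b \<ge> 0" shows "DD b l > 0"
proof -
  have n: "l + b * sqrt l \<ge> l" using b l by simp
  have "l / (l + b * sqrt l) > 0" using l n by simp
  moreover have "((l + b * sqrt l) - l) / sqrt (l + b * sqrt l) \<ge> 0" using n l by (intro divide_nonneg_nonneg) auto
  moreover have "H (aa b l) + 2 / (3 * sqrt (l + b * sqrt l)) > 0"
    using H_pos[of "aa b l"] n l by (simp add: add_pos_pos)
  ultimately show ?thesis unfolding DD_def by (intro add_pos_nonneg mult_nonneg_nonneg) auto
qed

lemma isCont_H_comp[continuous_intros]: "isCont f x \<Longrightarrow> isCont (\<lambda>x. H (f x)) x"
  by (rule isCont_o2[OF _ H_isCont])

lemma UB_cont: assumes l: "l > 0" shows "continuous_on {0..} (\<lambda>b. UB b l)"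
proof (rule continuous_at_imp_continuous_on, rule ballI)
  fix b :: real assume "b \<in> {0..}"
  hence b: "b \<ge> 0" by simp
  have n: "l + b * sqrt l > 0" using b l by (simp add: add_pos_nonneg)
  have "isCont (\<lambda>b. DD b l) b"
    unfolding DD_def aa_def using n l by (intro continuous_intros) auto
  hence "isCont (\<lambda>b. inverse (DD b l)) b"
    using DD_pos[OF l b] by (intro continuous_intros) auto
  thus "isCont (\<lambda>b. UB b l) b" by (simp add: UB_DD)
qed

lemma q_mono: fixes l n1 n2 :: real assumes l: "l > 0" and "l \<le> n1" "n1 \<le> n2"
  shows "- 2 * n1 * (1 - l / n1 + ln (l / n1)) \<le> - 2 * n2 * (1 - l / n2 + ln (l / n2))"
proof -
  let ?q = "\<lambda>n. 2 * (n * ln n - n * ln l - n + l)"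
  have eq: "- 2 * n * (1 - l / n + ln (l / n)) = ?q n" if "n > 0" for n :: real
    using that l by (simp add: ln_div field_simps)
  have "?q n1 \<le> ?q n2"
  proof (rule DERIV_nonneg_imp_nondecreasing[OF assms(3)])
    fix x assume x: "n1 \<le> x" "x \<le> n2"
    hence xp: "x > 0" "x \<ge> l" using assms by auto
    have "DERIV ?q x :> 2 * (ln x - ln l)"
      using xp by (auto intro!: derivative_eq_intros simp: field_simps)
    moreover have "2 * (ln x - ln l) \<ge> 0" using xp l by simp
    ultimately show "\<exists>y. DERIV ?q x :> y \<and> y \<ge> 0" by blast
  qed
  thus ?thesis using eq[of n1] eq[of n2] assms by simp
qed

lemma aa_mono: assumes l: "l > 0" and "0 \<le> b" "b \<le> b'" shows "aa b l \<le> aa b' l"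
  unfolding aa_def
proof (rule real_sqrt_le_mono, rule q_mono[OF l])
  show "l \<le> l + b * sqrt l" using assms by simp
  show "l + b * sqrt l \<le> l + b' * sqrt l" using assms by (simp add: mult_right_mono)
qed

lemma DD_upper: assumes l: "l \<ge> 1" and b: "0 \<le> b" "b \<le> B"
  shows "DD b l \<le> 1 + B * (H (aa B l) + 2 / (3 * sqrt l))"
proof -
  have l0: "l > 0" using l by simp
  let ?n = "l + b * sqrt l"
  have n: "?n \<ge> l" using b l0 by simp
  have r1: "l / ?n \<le> 1" using n l0 by simp
  have g: "(?n - l) / sqrt ?n \<le> b"
  proof -
    have "sqrt l \<le> sqrt ?n" using n by (rule real_sqrt_le_mono)
    hence "b * sqrt l \<le> b * sqrt ?n" using b by (simp add: mult_left_mono)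
    moreover have "sqrt ?n > 0" using n l0 by simp
    ultimately show ?thesis by (simp add: divide_le_eq)
  qed
  have g0: "(?n - l) / sqrt ?n \<ge> 0" using n l0 by (intro divide_nonneg_nonneg) auto
  have h: "H (aa b l) + 2 / (3 * sqrt ?n) \<le> H (aa B l) + 2 / (3 * sqrt l)"
  proof (rule add_mono)
    show "H (aa b l) \<le> H (aa B l)" using aa_mono[OF l0 b] by (rule H_mono)
    have "sqrt l \<le> sqrt ?n" using n by (rule real_sqrt_le_mono)
    thus "2 / (3 * sqrt ?n) \<le> 2 / (3 * sqrt l)" using l0 by (simp add: frac_le)
  qed
  have "2 / (3 * sqrt ?n) \<ge> 0" using n l0 by simp
  hence h0: "H (aa b l) + 2 / (3 * sqrt ?n) \<ge> 0" using H_pos[of "aa b l"] by linarith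
  have "(?n - l) / sqrt ?n * (H (aa b l) + 2 / (3 * sqrt ?n)) \<le> B * (H (aa B l) + 2 / (3 * sqrt l))"
    using g g0 h h0 b by (intro mult_mono) auto
  thus ?thesis using r1 unfolding DD_def by simp
qed

lemma UB_lower: assumes l: "l \<ge> 1" and b: "0 \<le> b" "b \<le> B"
  shows "inverse (1 + B * (H (aa B l) + 2 / (3 * sqrt l))) \<le> UB b l"
  unfolding UB_DD using DD_upper[OF assms] DD_pos[of l b] l b
  by (intro le_imp_inverse_le) auto

lemma UB_lower_lim: assumes B: "B \<ge> 0"
  shows "((\<lambda>l. inverse (1 + B * (H (aa B l) + 2 / (3 * sqrt l)))) \<longlongrightarrow> inverse (M B)) at_top"
proof -
  have 3: "((\<lambda>l::real. 2 / (3 * sqrt l)) \<longlongrightarrow> 0) at_top" by real_asymp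
  have 4: "((\<lambda>l. H (aa B l)) \<longlongrightarrow> H B) at_top"
    by (rule isCont_tendsto_compose[OF H_isCont aa_lim[OF B]])
  have "((\<lambda>l. inverse (1 + B * (H (aa B l) + 2 / (3 * sqrt l)))) \<longlongrightarrow> inverse (1 + B * (H B + 0))) at_top"
    using M_ge1[OF B] by (intro tendsto_inverse tendsto_add tendsto_mult tendsto_const 3 4) (auto simp: M_eq)
  thus ?thesis by (simp add: M_eq)
qed


lemma Iint_cont_on: assumes l: "l > 0" shows "continuous_on {N0..N} (\<lambda>n. Iint n l)"
  unfolding Iint_def
proof (rule cont_param[where w = "\<lambda>t. t * exp (- l * t) * (1 + t) powr (N - 1)"])
  show "set_integrable lborel {0..} (\<lambda>t. t * exp (- l * t) * (1 + t) powr (p - 1))" for p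
    using erl_int[OF l] .
  show "set_integrable lborel {0..} (\<lambda>t. t * exp (- l * t) * (1 + t) powr (N - 1))"
    using erl_int[OF l] .
  show "\<bar>x * exp (- l * x) * (1 + x) powr (p - 1)\<bar> \<le> x * exp (- l * x) * (1 + x) powr (N - 1)"
    if "p \<in> {N0..N}" "x \<ge> 0" for p x :: real
  proof -
    have "(1 + x) powr (p - 1) \<le> (1 + x) powr (N - 1)" using that by (intro powr_mono) auto
    thus ?thesis using that by (simp add: mult_left_mono)
  qed
  show "continuous_on {N0..N} (\<lambda>p. x * exp (- l * x) * (1 + x) powr (p - 1))" if "x \<ge> 0" for x :: real
    using that by (intro continuous_intros) auto
qed

lemma Iint_isCont: assumes l: "l > 0" shows "isCont (\<lambda>n. Iint n l) n"
proof -
  have "continuous_on {n-1..n+1} (\<lambda>n. Iint n l)" by (rule Iint_cont_on[OF l])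
  moreover have "n \<in> interior {n-1..n+1}" by auto
  ultimately show ?thesis using continuous_on_interior by blast
qed

lemma erlangC_isCont: assumes l: "l > 0" shows "isCont (\<lambda>n. erlangC n l) n"
proof -
  have "isCont (\<lambda>n. min 1 (inverse (l * Iint n l))) n"
    using Iint_pos[OF l, of n] l by (intro continuous_intros Iint_isCont[OF l]) auto
  thus ?thesis by (simp add: erlangC_Iint[abs_def])
qed


lemma seq_top: fixes c :: real assumes "c > 0" shows "filterlim (\<lambda>m::nat. real m * c) at_top sequentially"
proof -
  have "filterlim (\<lambda>m::nat. c * real m) at_top sequentially"
    by (rule filterlim_tendsto_pos_mult_at_top[OF tendsto_const assms filterlim_real_sequentially])
  thus ?thesis by (simp add: mult.commute)
qed

lemma ev_sqrt: fixes c d B :: real assumes c: "c > 0" and d: "d \<ge> 0" and B: "B \<ge> 0"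
  shows "eventually (\<lambda>m::nat. B * sqrt (real m * d) \<le> real m * c) sequentially"
proof -
  define X where "X = (B * sqrt d / c)^2"
  have "eventually (\<lambda>m::nat. real m \<ge> X) sequentially"
    using filterlim_real_sequentially unfolding filterlim_at_top by blast
  thus ?thesis
  proof eventually_elim
    case (elim m)
    have "sqrt X \<le> sqrt (real m)" using elim by (rule real_sqrt_le_mono)
    moreover have "sqrt X = B * sqrt d / c" unfolding X_def using B d c by simp
    ultimately have "B * sqrt d \<le> c * sqrt (real m)" using c by (simp add: divide_le_eq mult.commute)
    hence "B * sqrt d * sqrt (real m) \<le> c * sqrt (real m) * sqrt (real m)" by (simp add: mult_right_mono)
    also have "\<dots> = real m * c" by simp
    finally show ?case by (simp add: real_sqrt_mult mult_ac)
  qed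
qed

lemma erl_lim_seq: fixes c b :: real assumes "c > 0" "b \<ge> 0"
  shows "(\<lambda>m::nat. erlangC (real m * c + b * sqrt (real m * c)) (real m * c)) \<longlonglongrightarrow> inverse (M b)"
  using filterlim_compose[OF erl_lim[OF assms(2)] seq_top[OF assms(1)]] by simp

lemma comp_above: fixes a c b :: real assumes c: "0 < a" "a < c" and b: "b \<ge> 0"
  shows "eventually (\<lambda>m::nat. erlangC (real m * a + b * sqrt (real m * a)) (real m * c) = 1) sequentially"
proof -
  have ev1: "eventually (\<lambda>m::nat. b * sqrt (real m * a) \<le> real m * (c - a)) sequentially"
    by (rule ev_sqrt) (use assms in auto)
  show ?thesis using ev1 eventually_gt_at_top[of "0::nat"]
proof eventually_elim
  case (elim m)
  have "real m * c > 0" using elim assms by simp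
  moreover have "real m * a + b * sqrt (real m * a) \<le> real m * c" using elim by (simp add: algebra_simps)
  ultimately show ?case by (rule erlangC_one)
qed
qed

lemma M_big: fixes e :: real assumes "e > 0" shows "\<exists>B\<ge>0. inverse (M B) < e"
proof -
  define B where "B = (1 / e) / H 0"
  have B0: "B \<ge> 0" using H_pos[of 0] assms by (simp add: B_def)
  have "1 + B * H 0 \<le> M B" by (rule M_lower[OF B0])
  moreover have "B * H 0 = 1 / e" using H_pos[of 0] by (simp add: B_def)
  ultimately have "M B > 1 / e" by simp
  hence "inverse (M B) < inverse (1 / e)" using assms by (intro less_imp_inverse_less) auto
  hence "inverse (M B) < e" by simp
  thus ?thesis using B0 by blast
qed

lemma comp_below: fixes a c b :: real assumes c: "0 < c" "c < a" and b: "b \<ge> 0"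
  shows "(\<lambda>m::nat. erlangC (real m * a + b * sqrt (real m * a)) (real m * c)) \<longlonglongrightarrow> 0"
proof (rule order_tendstoI)
  fix y :: real assume "y < 0"
  show "eventually (\<lambda>m. y < erlangC (real m * a + b * sqrt (real m * a)) (real m * c)) sequentially"
    using eventually_gt_at_top[of "0::nat"]
  proof eventually_elim
    case (elim m)
    have "real m * c > 0" using elim c by simp
    thus ?case using erlangC_nonneg[of "real m * c"] \<open>y < 0\<close> by (meson less_le_trans)
  qed
next
  fix y :: real assume y: "y > 0"
  obtain B where B: "B \<ge> 0" "inverse (M B) < y" using M_big[OF y] by blast
  have "eventually (\<lambda>m. erlangC (real m * c + B * sqrt (real m * c)) (real m * c) < y) sequentially"
    using erl_lim_seq[OF c(1) B(1)] B(2) by (rule order_tendstoD)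
  show "eventually (\<lambda>m. erlangC (real m * a + b * sqrt (real m * a)) (real m * c) < y) sequentially"
  proof -
    have ev1: "eventually (\<lambda>m::nat. B * sqrt (real m * c) \<le> real m * (a - c)) sequentially"
      by (rule ev_sqrt) (use assms B in auto)
    show ?thesis using ev1 eventually_gt_at_top[of "0::nat"] \<open>eventually (\<lambda>m. erlangC (real m * c + B * sqrt (real m * c)) (real m * c) < y) sequentially\<close>
  proof eventually_elim
    case (elim m)
    have mc: "real m * c > 0" using elim c by simp
    have "real m * c + B * sqrt (real m * c) \<le> real m * a" using elim by (simp add: algebra_simps)
    also have "\<dots> \<le> real m * a + b * sqrt (real m * a)" using b c by simp
    finally have "erlangC (real m * a + b * sqrt (real m * a)) (real m * c) \<le> erlangC (real m * c + B * sqrt (real m * c)) (real m * c)"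
      by (rule erlangC_antimono[OF mc])
    thus ?case using elim by simp
  qed
  qed
qed


lemma Lam_eq: "Lam \<Lambda>0 m j = real m * \<Lambda>0 j" by (simp add: Lam_def)
lemma staff_eq: "staff \<Lambda>0 m b k = real m * \<Lambda>0 k + b * sqrt (real m * \<Lambda>0 k)"
  by (simp add: staff_def Lam_def)

lemma split_sum: fixes f :: "nat \<Rightarrow> real" assumes i: "i \<in> {1..K}"
  shows "(\<Sum>j=1..K. f j) = (\<Sum>j\<in>{1..<i}. f j) + f i + (\<Sum>j=i+1..K. f j)"
proof -
  have "{1..K} = {1..<i} \<union> {i..K}" using i by auto
  hence "(\<Sum>j=1..K. f j) = (\<Sum>j\<in>{1..<i}. f j) + (\<Sum>j=i..K. f j)"
    by (simp add: sum.union_disjoint ivl_disj_int)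
  also have "(\<Sum>j=i..K. f j) = f i + (\<Sum>j=Suc i..K. f j)" using i by (simp add: sum.atLeast_Suc_atMost)
  finally show ?thesis by simp
qed

lemma sum_limit_value: fixes p :: "nat \<Rightarrow> real" and v :: real assumes i: "i \<in> {1..K}"
  shows "(\<Sum>j=1..K. p j * (if j < i then 0 else if j = i then v else 1)) = p i * v + (\<Sum>j=i+1..K. p j)"
proof -
  have "(\<Sum>j\<in>{1..<i}. p j * (if j < i then 0 else if j = i then v else 1)) = 0" by simp
  moreover have "(\<Sum>j=i+1..K. p j * (if j < i then 0 else if j = i then v else 1)) = (\<Sum>j=i+1..K. p j)"
    by (rule sum.cong) auto
  ultimately show ?thesis using split_sum[OF i, of "\<lambda>j. p j * (if j < i then 0 else if j = i then v else 1)"] by simp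
qed

lemma sum_lim:
  fixes p \<Lambda>0 :: "nat \<Rightarrow> real" and b :: real
  assumes Lp: "\<And>k. k \<in> {1..K} \<Longrightarrow> \<Lambda>0 k > 0"
    and L_mono: "\<And>k l. k \<in> {1..K} \<Longrightarrow> l \<in> {1..K} \<Longrightarrow> k < l \<Longrightarrow> \<Lambda>0 k < \<Lambda>0 l"
    and i: "i \<in> {1..K}" and b: "b \<ge> 0"
  shows "(\<lambda>m. \<Sum>j=1..K. p j * erlangC (staff \<Lambda>0 m b i) (Lam \<Lambda>0 m j)) \<longlonglongrightarrow> p i * inverse (M b) + (\<Sum>j=i+1..K. p j)"
proof -
  have "(\<lambda>m. \<Sum>j=1..K. p j * erlangC (staff \<Lambda>0 m b i) (Lam \<Lambda>0 m j)) \<longlonglongrightarrow>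
        (\<Sum>j=1..K. p j * (if j < i then 0 else if j = i then inverse (M b) else 1))"
  proof (rule tendsto_sum, rule tendsto_mult[OF tendsto_const])
    fix j assume j: "j \<in> {1..K}"
    show "(\<lambda>m. erlangC (staff \<Lambda>0 m b i) (Lam \<Lambda>0 m j)) \<longlonglongrightarrow> (if j < i then 0 else if j = i then inverse (M b) else 1)"
    proof (cases "j < i")
      case True
      have "(\<lambda>m::nat. erlangC (real m * \<Lambda>0 i + b * sqrt (real m * \<Lambda>0 i)) (real m * \<Lambda>0 j)) \<longlonglongrightarrow> 0"
        by (rule comp_below) (use True Lp[OF j] L_mono[OF j i] b in auto)
      thus ?thesis using True by (simp add: staff_eq Lam_eq)
    next
      case False
      show ?thesis
      proof (cases "j = i")
        case True
        thus ?thesis using erl_lim_seq[OF Lp[OF i] b] by (simp add: staff_eq Lam_eq)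
      next
        case ne: False
        hence ij: "i < j" using False by simp
        have "eventually (\<lambda>m::nat. erlangC (real m * \<Lambda>0 i + b * sqrt (real m * \<Lambda>0 i)) (real m * \<Lambda>0 j) = 1) sequentially"
          by (rule comp_above) (use Lp[OF i] L_mono[OF i j ij] b in auto)
        hence "(\<lambda>m::nat. erlangC (real m * \<Lambda>0 i + b * sqrt (real m * \<Lambda>0 i)) (real m * \<Lambda>0 j)) \<longlonglongrightarrow> 1"
          by (rule tendsto_eventually)
        thus ?thesis using False ne by (simp add: staff_eq Lam_eq)
      qed
    qed
  qed
  thus ?thesis by (simp only: sum_limit_value[OF i])
qed

lemma sum_low:
  fixes p \<Lambda>0 :: "nat \<Rightarrow> real" and n :: real
  assumes Lp: "\<And>k. k \<in> {1..K} \<Longrightarrow> \<Lambda>0 k > 0"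
    and L_mono: "\<And>k l. k \<in> {1..K} \<Longrightarrow> l \<in> {1..K} \<Longrightarrow> k < l \<Longrightarrow> \<Lambda>0 k < \<Lambda>0 l"
    and p_pos: "\<And>k. k \<in> {1..K} \<Longrightarrow> p k > 0"
    and i: "i \<in> {1..K}" and m: "m > 0" and n: "n \<le> Lam \<Lambda>0 m i"
  shows "(\<Sum>j=i..K. p j) \<le> (\<Sum>j=1..K. p j * erlangC n (Lam \<Lambda>0 m j))"
proof -
  have "{1..K} = {1..<i} \<union> {i..K}" using i by auto
  hence eq: "(\<Sum>j=1..K. p j * erlangC n (Lam \<Lambda>0 m j)) =
        (\<Sum>j\<in>{1..<i}. p j * erlangC n (Lam \<Lambda>0 m j)) + (\<Sum>j=i..K. p j * erlangC n (Lam \<Lambda>0 m j))"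
    by (simp add: sum.union_disjoint ivl_disj_int)
  have "(\<Sum>j\<in>{1..<i}. p j * erlangC n (Lam \<Lambda>0 m j)) \<ge> 0"
  proof (rule sum_nonneg)
    fix j assume "j \<in> {1..<i}"
    hence j: "j \<in> {1..K}" using i by auto
    have "Lam \<Lambda>0 m j > 0" using Lp[OF j] m by (simp add: Lam_eq)
    thus "0 \<le> p j * erlangC n (Lam \<Lambda>0 m j)" using p_pos[OF j] erlangC_nonneg by simp
  qed
  moreover have "(\<Sum>j=i..K. p j * erlangC n (Lam \<Lambda>0 m j)) = (\<Sum>j=i..K. p j)"
  proof (rule sum.cong[OF refl])
    fix j assume ji: "j \<in> {i..K}"
    hence j: "j \<in> {1..K}" using i by auto
    have "\<Lambda>0 i \<le> \<Lambda>0 j" using L_mono[OF i j] ji by (cases "i = j") auto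
    hence "Lam \<Lambda>0 m i \<le> Lam \<Lambda>0 m j" by (simp add: Lam_eq mult_left_mono)
    moreover have "Lam \<Lambda>0 m j > 0" using Lp[OF j] m by (simp add: Lam_eq)
    ultimately have "erlangC n (Lam \<Lambda>0 m j) = 1" using n by (intro erlangC_one) auto
    thus "p j * erlangC n (Lam \<Lambda>0 m j) = p j" by simp
  qed
  ultimately show ?thesis using eq by simp
qed


lemma isCont_erl: "l > 0 \<Longrightarrow> isCont f x \<Longrightarrow> isCont (\<lambda>x. erlangC (f x) l) x"
  by (rule isCont_o2[OF _ erlangC_isCont])

lemma cbar_mono: fixes x y :: real assumes "strict_mono_on {0..} cbar" "0 \<le> x" "x \<le> y" shows "cbar x \<le> (cbar y :: real)"
proof (cases "x = y")
  case False
  hence "x < y" using assms by simp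
  thus ?thesis using assms strict_mono_onD[OF assms(1), of x y] by auto
qed simp

lemma staff_nonneg: fixes b :: real shows "m > 0 \<Longrightarrow> \<Lambda>0 k > 0 \<Longrightarrow> b \<ge> 0 \<Longrightarrow> staff \<Lambda>0 m b k \<ge> 0"
  by (simp add: staff_eq)

lemma staff_mono: fixes b b' :: real shows "\<Lambda>0 k > 0 \<Longrightarrow> b \<le> b' \<Longrightarrow> staff \<Lambda>0 m b k \<le> staff \<Lambda>0 m b' k"
  by (simp add: staff_eq mult_right_mono)

lemma g_antimono:
  fixes p \<Lambda>0 :: "nat \<Rightarrow> real"
  assumes Lp: "\<And>k. k \<in> {1..K} \<Longrightarrow> \<Lambda>0 k > 0" and p_pos: "\<And>k. k \<in> {1..K} \<Longrightarrow> p k > 0"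
    and i: "i \<in> {1..K}" and m: "m > 0" and bb: "b \<le> b'"
  shows "(\<Sum>j=1..K. p j * erlangC (staff \<Lambda>0 m b' i) (Lam \<Lambda>0 m j)) \<le> (\<Sum>j=1..K. p j * erlangC (staff \<Lambda>0 m b i) (Lam \<Lambda>0 m j))"
proof (rule sum_mono)
  fix j assume j: "j \<in> {1..K}"
  have "Lam \<Lambda>0 m j > 0" using Lp[OF j] m by (simp add: Lam_eq)
  hence "erlangC (staff \<Lambda>0 m b' i) (Lam \<Lambda>0 m j) \<le> erlangC (staff \<Lambda>0 m b i) (Lam \<Lambda>0 m j)"
    using staff_mono[of \<Lambda>0 i b b' m, OF Lp[OF i] bb] by (rule erlangC_antimono)
  thus "p j * erlangC (staff \<Lambda>0 m b' i) (Lam \<Lambda>0 m j) \<le> p j * erlangC (staff \<Lambda>0 m b i) (Lam \<Lambda>0 m j)"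
    using p_pos[OF j] by simp
qed

lemma g_cont:
  fixes p \<Lambda>0 :: "nat \<Rightarrow> real"
  assumes Lp: "\<And>k. k \<in> {1..K} \<Longrightarrow> \<Lambda>0 k > 0" and m: "m > 0"
  shows "continuous_on {0..} (\<lambda>b. \<Sum>j=1..K. p j * erlangC (staff \<Lambda>0 m b i) (Lam \<Lambda>0 m j))"
proof (rule continuous_at_imp_continuous_on, rule ballI)
  fix b :: real assume "b \<in> {0..}"
  show "isCont (\<lambda>b. \<Sum>j=1..K. p j * erlangC (staff \<Lambda>0 m b i) (Lam \<Lambda>0 m j)) b"
  proof (intro continuous_intros)
    fix j assume j: "j \<in> {1..K}"
    have "Lam \<Lambda>0 m j > 0" using Lp[OF j] m by (simp add: Lam_eq)
    thus "isCont (\<lambda>b. erlangC (staff \<Lambda>0 m b i) (Lam \<Lambda>0 m j)) b"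
      by (rule isCont_erl) (simp add: staff_eq)
  qed
qed


theorem theorem7:
  fixes K :: nat and p \<Lambda>0 :: "nat \<Rightarrow> real" and cbar :: "real \<Rightarrow> real"
    and \<epsilon> :: real and i :: nat
  assumes p_pos: "\<And>k. k \<in> {1..K} \<Longrightarrow> p k > 0"
    and p_sum: "(\<Sum>k=1..K. p k) = 1"
    and L_pos: "\<Lambda>0 1 > 0"
    and L_mono: "\<And>k l. k \<in> {1..K} \<Longrightarrow> l \<in> {1..K} \<Longrightarrow> k < l \<Longrightarrow> \<Lambda>0 k < \<Lambda>0 l"
    and c_cont: "continuous_on {0..} cbar"
    and c_mono: "strict_mono_on {0..} cbar"
    and eps: "0 < \<epsilon>" "\<epsilon> < 1"
    and i_range: "i \<in> {1..K}"
    and i_upper: "(\<Sum>k=i..K. p k) > \<epsilon>"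
    and i_lower: "(\<Sum>k=i+1..K. p k) < \<epsilon>"
  shows "\<exists>mbar. (\<forall>m\<ge>mbar. i \<in> Wset K p \<Lambda>0 cbar \<epsilon> m) \<and>
           (\<exists>\<beta>G \<beta>F :: nat \<Rightarrow> real. \<exists>\<beta>star > 0.
              (\<forall>m\<ge>mbar. optG K p \<Lambda>0 cbar \<epsilon> i m (\<beta>G m)) \<and>
              (\<forall>m\<ge>mbar. optF K p \<Lambda>0 cbar \<epsilon> m (\<beta>F m) i) \<and>
              \<beta>G \<longlonglongrightarrow> \<beta>star \<and> \<beta>F \<longlonglongrightarrow> \<beta>star)"
proof -
  have K1: "1 \<in> {1..K}" using i_range by auto
  have Lp: "\<Lambda>0 k > 0" if k: "k \<in> {1..K}" for k
  proof (cases "k = 1")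
    case False
    hence "1 < k" using k by auto
    thus ?thesis using L_mono[OF K1 k] L_pos by simp
  qed (use L_pos in simp)
  have Li: "\<Lambda>0 i > 0" using Lp[OF i_range] .
  have pi: "p i > 0" using p_pos[OF i_range] .
  define r where "r = \<epsilon> - (\<Sum>k=i+1..K. p k)"
  have r0: "r > 0" using i_lower by (simp add: r_def)
  have "(\<Sum>k=i..K. p k) = p i + (\<Sum>k=Suc i..K. p k)" using i_range by (simp add: sum.atLeast_Suc_atMost)
  hence rpi: "r < p i" using i_upper by (simp add: r_def)
  define \<rho> where "\<rho> = r / p i"
  have \<rho>0: "\<rho> > 0" using r0 pi by (simp add: \<rho>_def)
  have \<rho>1: "\<rho> < 1" using rpi pi by (simp add: \<rho>_def)
  define b0 where "b0 = (1 / \<rho>) / H 0"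
  have b00: "b0 \<ge> 0" using H_pos[of 0] \<rho>0 by (simp add: b0_def)
  have "M b0 \<ge> 1 + b0 * H 0" by (rule M_lower[OF b00])
  moreover have "b0 * H 0 = 1 / \<rho>" using H_pos[of 0] by (simp add: b0_def)
  ultimately have Mb0: "1 / \<rho> \<le> M b0" by simp
  have "M 0 \<le> 1 / \<rho>" using \<rho>0 \<rho>1 by (simp add: M_zero)
  then obtain bs where bs: "bs \<ge> 0" "bs \<le> b0" "M bs = 1 / \<rho>"
    using IVT[of M 0 "1 / \<rho>" b0] Mb0 b00 M_isCont by blast
  have "bs \<noteq> 0" using bs(3) \<rho>0 \<rho>1 M_zero by auto
  hence bs0: "bs > 0" using bs(1) by simp
  have invbs: "inverse (M bs) = \<rho>" using bs(3) by simp
  have inv_above: "inverse (M b) < \<rho>" if "b > bs" for b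
  proof -
    have "M bs < M b" using M_strict[OF bs(1) that] .
    moreover have "M bs > 0" using M_ge1[OF bs(1)] by simp
    ultimately have "inverse (M b) < inverse (M bs)" by (rule less_imp_inverse_less)
    thus ?thesis using invbs by simp
  qed
  have inv_below: "inverse (M b) > \<rho>" if "0 \<le> b" "b < bs" for b
  proof -
    have "M b < M bs" using M_strict[OF that] .
    moreover have "M b > 0" using M_ge1[OF that(1)] by simp
    ultimately have "inverse (M bs) < inverse (M b)" by (rule less_imp_inverse_less)
    thus ?thesis using invbs by simp
  qed
  define g where "g m b = (\<Sum>j=1..K. p j * erlangC (staff \<Lambda>0 m b i) (Lam \<Lambda>0 m j))" for m b
  define lam where "lam m = Lam \<Lambda>0 m i" for m
  have feasF_iff: "feasF K p \<Lambda>0 \<epsilon> m b i \<longleftrightarrow> b \<ge> 0 \<and> g m b \<le> \<epsilon>" for m b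
    using i_range by (auto simp: feasF_def g_def)
  have feasG_iff: "feasG K p \<Lambda>0 \<epsilon> i m b \<longleftrightarrow> b \<ge> 0 \<and> p i * UB b (lam m) \<le> r" for m b
    by (simp add: feasG_def r_def lam_def)
  have lam_top: "filterlim lam at_top sequentially"
    using seq_top[OF Li] by (simp add: lam_def[abs_def] Lam_eq)
  have g_lim: "(\<lambda>m. g m b) \<longlonglongrightarrow> p i * inverse (M b) + (\<Sum>j=i+1..K. p j)" if "b \<ge> 0" for b
    unfolding g_def by (rule sum_lim[OF _ L_mono i_range that]) (use Lp in auto)
  have g_ev_lt: "eventually (\<lambda>m. g m b < \<epsilon>) sequentially" if "b > bs" for b
  proof -
    have "p i * inverse (M b) < p i * \<rho>" using inv_above[OF that] pi by simp
    hence "p i * inverse (M b) + (\<Sum>j=i+1..K. p j) < \<epsilon>" using pi by (simp add: \<rho>_def r_def)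
    thus ?thesis using g_lim[of b] that bs(1) by (intro order_tendstoD) auto
  qed
  have g_ev_gt: "eventually (\<lambda>m. g m b > \<epsilon>) sequentially" if "0 \<le> b" "b < bs" for b
  proof -
    have "p i * inverse (M b) > p i * \<rho>" using inv_below[OF that] pi by simp
    hence "p i * inverse (M b) + (\<Sum>j=i+1..K. p j) > \<epsilon>" using pi by (simp add: \<rho>_def r_def)
    thus ?thesis using g_lim[of b] that by (intro order_tendstoD) auto
  qed
  have UB_ev_lt: "eventually (\<lambda>m. p i * UB b (lam m) < r) sequentially" if "b > bs" for b
  proof -
    have lim: "(\<lambda>m. p i * UB b (lam m)) \<longlonglongrightarrow> p i * inverse (M b)"
      using filterlim_compose[OF UB_lim lam_top, of b] that bs(1) by (intro tendsto_mult tendsto_const) auto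
    have "p i * inverse (M b) < p i * \<rho>" using inv_above[OF that] pi by simp
    hence "p i * inverse (M b) < r" using pi by (simp add: \<rho>_def)
    with lim show ?thesis by (rule order_tendstoD)
  qed
  have UB_ev_gt: "eventually (\<lambda>m. \<forall>b. 0 \<le> b \<and> b \<le> B \<longrightarrow> p i * UB b (lam m) > r) sequentially"
    if "0 \<le> B" "B < bs" for B
  proof -
    have lim: "(\<lambda>m. p i * inverse (1 + B * (H (aa B (lam m)) + 2 / (3 * sqrt (lam m))))) \<longlonglongrightarrow> p i * inverse (M B)"
      using filterlim_compose[OF UB_lower_lim lam_top, of B] that by (intro tendsto_mult tendsto_const) auto
    have "p i * inverse (M B) > p i * \<rho>" using inv_below[OF that] pi by simp
    hence "p i * inverse (M B) > r" using pi by (simp add: \<rho>_def)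
    hence ev1: "eventually (\<lambda>m. p i * inverse (1 + B * (H (aa B (lam m)) + 2 / (3 * sqrt (lam m)))) > r) sequentially"
      using lim by (intro order_tendstoD) auto
    have ev2: "eventually (\<lambda>m. lam m \<ge> 1) sequentially"
      using lam_top by (simp add: filterlim_at_top)
    show ?thesis using ev1 ev2
    proof eventually_elim
      case (elim m)
      show ?case
      proof (intro allI impI)
        fix b assume b: "0 \<le> b \<and> b \<le> B"
        have "inverse (1 + B * (H (aa B (lam m)) + 2 / (3 * sqrt (lam m)))) \<le> UB b (lam m)"
          using UB_lower[OF elim(2)] b by auto
        hence "p i * inverse (1 + B * (H (aa B (lam m)) + 2 / (3 * sqrt (lam m)))) \<le> p i * UB b (lam m)"
          using pi by simp
        thus "p i * UB b (lam m) > r" using elim(1) by simp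
      qed
    qed
  qed
  have "eventually (\<lambda>m. g m (bs + 1) < \<epsilon> \<and> p i * UB (bs + 1) (lam m) < r \<and> m \<ge> 1) sequentially"
    using g_ev_lt[OF less_add_one[of bs]] UB_ev_lt[OF less_add_one[of bs]] eventually_ge_at_top[of "1::nat"]
    by eventually_elim auto
  then obtain mbar where mbar: "\<And>m. m \<ge> mbar \<Longrightarrow> g m (bs + 1) < \<epsilon> \<and> p i * UB (bs + 1) (lam m) < r \<and> m \<ge> 1"
    unfolding eventually_sequentially by blast
  define SF where "SF m = {b. feasF K p \<Lambda>0 \<epsilon> m b i}" for m
  define SG where "SG m = {b. feasG K p \<Lambda>0 \<epsilon> i m b}" for m
  define \<beta>F where "\<beta>F m = Inf (SF m)" for m
  define \<beta>G where "\<beta>G m = Inf (SG m)" for m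
  have SF_ne: "bs + 1 \<in> SF m" if "m \<ge> mbar" for m
    using mbar[OF that] bs(1) by (simp add: SF_def feasF_iff)
  have SG_ne: "bs + 1 \<in> SG m" if "m \<ge> mbar" for m
    using mbar[OF that] bs(1) by (simp add: SG_def feasG_iff)
  have SF_bdd: "bdd_below (SF m)" for m
    by (rule bdd_belowI[of _ 0]) (simp add: SF_def feasF_iff)
  have SG_bdd: "bdd_below (SG m)" for m
    by (rule bdd_belowI[of _ 0]) (simp add: SG_def feasG_iff)
  have SF_closed: "closed (SF m)" if "m \<ge> 1" for m
  proof -
    have "SF m = {0..} \<inter> (g m) -` {..\<epsilon>}" by (auto simp: SF_def feasF_iff)
    moreover have "continuous_on {0..} (g m)"
      unfolding g_def[abs_def] using that by (intro g_cont) (use Lp in auto)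
    ultimately show ?thesis by (simp add: continuous_closed_preimage)
  qed
  have SG_closed: "closed (SG m)" if "m \<ge> 1" for m
  proof -
    have "SG m = {0..} \<inter> (\<lambda>b. p i * UB b (lam m)) -` {..r}" by (auto simp: SG_def feasG_iff)
    moreover have "lam m > 0" using that Li by (simp add: lam_def Lam_eq)
    hence "continuous_on {0..} (\<lambda>b. p i * UB b (lam m))"
      by (intro continuous_intros UB_cont)
    ultimately show ?thesis by (simp add: continuous_closed_preimage)
  qed
  have \<beta>F_in: "\<beta>F m \<in> SF m" if "m \<ge> mbar" for m
    unfolding \<beta>F_def using SF_ne[OF that] SF_bdd SF_closed mbar[OF that] by (intro closed_contains_Inf) auto
  have \<beta>G_in: "\<beta>G m \<in> SG m" if "m \<ge> mbar" for m
    unfolding \<beta>G_def using SG_ne[OF that] SG_bdd SG_closed mbar[OF that] by (intro closed_contains_Inf) auto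
  have \<beta>F_le: "\<beta>F m \<le> b" if "b \<in> SF m" for m b
    unfolding \<beta>F_def using that SF_bdd by (rule cInf_lower)
  have \<beta>G_le: "\<beta>G m \<le> b" if "b \<in> SG m" for m b
    unfolding \<beta>G_def using that SG_bdd by (rule cInf_lower)
  have optG: "optG K p \<Lambda>0 cbar \<epsilon> i m (\<beta>G m)" if m: "m \<ge> mbar" for m
    unfolding optG_def
  proof (intro conjI allI impI)
    show "feasG K p \<Lambda>0 \<epsilon> i m (\<beta>G m)" using \<beta>G_in[OF m] by (simp add: SG_def)
    fix b' assume "feasG K p \<Lambda>0 \<epsilon> i m b'"
    hence "b' \<in> SG m" by (simp add: SG_def)
    hence le: "\<beta>G m \<le> b'" by (rule \<beta>G_le)
    have "\<beta>G m \<ge> 0" using \<beta>G_in[OF m] by (simp add: SG_def feasG_iff)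
    hence "staff \<Lambda>0 m (\<beta>G m) i \<ge> 0" using Li mbar[OF m] by (intro staff_nonneg) auto
    thus "cost cbar \<Lambda>0 m (\<beta>G m) i \<le> cost cbar \<Lambda>0 m b' i"
      unfolding cost_def using staff_mono[of \<Lambda>0 i "\<beta>G m" b' m, OF Li le]
      by (intro cbar_mono[OF c_mono])
  qed
  have optF: "optF K p \<Lambda>0 cbar \<epsilon> m (\<beta>F m) i" if m: "m \<ge> mbar" for m
    unfolding optF_def
  proof (intro conjI allI impI)
    have m1: "m > 0" using mbar[OF m] by simp
    show fF: "feasF K p \<Lambda>0 \<epsilon> m (\<beta>F m) i" using \<beta>F_in[OF m] by (simp add: SF_def)
    have bF0: "\<beta>F m \<ge> 0" using fF by (simp add: feasF_iff)
    fix b' k' assume f': "feasF K p \<Lambda>0 \<epsilon> m b' k'"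
    define n' where "n' = staff \<Lambda>0 m b' k'"
    have k': "k' \<in> {1..K}" and b'0: "b' \<ge> 0" using f' by (auto simp: feasF_def)
    have n'0: "n' \<ge> 0" unfolding n'_def using Lp[OF k'] m1 b'0 by (intro staff_nonneg) auto
    have sum': "(\<Sum>j=1..K. p j * erlangC n' (Lam \<Lambda>0 m j)) \<le> \<epsilon>" using f' by (simp add: feasF_def n'_def)
    have "staff \<Lambda>0 m (\<beta>F m) i \<le> n'"
    proof (rule ccontr)
      assume "\<not> staff \<Lambda>0 m (\<beta>F m) i \<le> n'"
      hence lt: "n' < staff \<Lambda>0 m (\<beta>F m) i" by simp
      show False
      proof (cases "n' \<le> Lam \<Lambda>0 m i")
        case True
        have "(\<Sum>j=i..K. p j) \<le> (\<Sum>j=1..K. p j * erlangC n' (Lam \<Lambda>0 m j))"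
          by (rule sum_low[OF _ L_mono p_pos i_range m1 True]) (use Lp in auto)
        thus False using sum' i_upper by simp
      next
        case False
        define b'' where "b'' = (n' - Lam \<Lambda>0 m i) / sqrt (Lam \<Lambda>0 m i)"
        have lpos: "Lam \<Lambda>0 m i > 0" using Li m1 by (simp add: Lam_eq)
        have b''0: "b'' \<ge> 0" using False lpos by (simp add: b''_def)
        have st: "staff \<Lambda>0 m b'' i = n'" using lpos by (simp add: staff_def b''_def)
        have "feasF K p \<Lambda>0 \<epsilon> m b'' i" using sum' b''0 st i_range by (simp add: feasF_def)
        hence "\<beta>F m \<le> b''" by (intro \<beta>F_le) (simp add: SF_def)
        hence "staff \<Lambda>0 m (\<beta>F m) i \<le> staff \<Lambda>0 m b'' i" by (rule staff_mono[of \<Lambda>0 i _ _ m, OF Li])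
        thus False using st lt by simp
      qed
    qed
    moreover have "staff \<Lambda>0 m (\<beta>F m) i \<ge> 0" using Li m1 bF0 by (intro staff_nonneg) auto
    ultimately show "cost cbar \<Lambda>0 m (\<beta>F m) i \<le> cost cbar \<Lambda>0 m b' k'"
      unfolding cost_def n'_def[symmetric] by (intro cbar_mono[OF c_mono])
  qed
  have \<beta>G_lim: "\<beta>G \<longlonglongrightarrow> bs"
  proof (rule order_tendstoI)
    fix a assume a: "a > bs"
    have h: "(bs + a) / 2 > bs" using a by simp
    have "eventually (\<lambda>m. p i * UB ((bs + a) / 2) (lam m) < r \<and> m \<ge> mbar) sequentially"
      using UB_ev_lt[OF h] eventually_ge_at_top[of mbar] by eventually_elim auto
    thus "eventually (\<lambda>m. \<beta>G m < a) sequentially"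
    proof eventually_elim
      case (elim m)
      have "(bs + a) / 2 \<in> SG m" using elim bs(1) a by (simp add: SG_def feasG_iff)
      hence "\<beta>G m \<le> (bs + a) / 2" by (rule \<beta>G_le)
      thus ?case using a by simp
    qed
  next
    fix a assume a: "a < bs"
    define B where "B = max 0 ((a + bs) / 2)"
    have B: "0 \<le> B" "B < bs" "a < B \<or> a < 0" using a bs0 by (auto simp: B_def)
    have "eventually (\<lambda>m. (\<forall>b. 0 \<le> b \<and> b \<le> B \<longrightarrow> p i * UB b (lam m) > r) \<and> m \<ge> mbar) sequentially"
      using UB_ev_gt[OF B(1,2)] eventually_ge_at_top[of mbar] by eventually_elim auto
    thus "eventually (\<lambda>m. a < \<beta>G m) sequentially"
    proof eventually_elim
      case (elim m)
      have "\<forall>b\<in>SG m. B \<le> b"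
      proof
        fix b assume "b \<in> SG m"
        hence "b \<ge> 0" "p i * UB b (lam m) \<le> r" by (auto simp: SG_def feasG_iff)
        thus "B \<le> b" using elim by (meson not_le less_le_trans order.strict_implies_order)
      qed
      hence "B \<le> \<beta>G m" "0 \<le> \<beta>G m"
        using SG_ne[of m] elim B unfolding \<beta>G_def by (auto intro!: cInf_greatest simp: SG_def feasG_iff)
      thus ?case using B(3) by auto
    qed
  qed
  have \<beta>F_lim: "\<beta>F \<longlonglongrightarrow> bs"
  proof (rule order_tendstoI)
    fix a assume a: "a > bs"
    have h: "(bs + a) / 2 > bs" using a by simp
    have "eventually (\<lambda>m. g m ((bs + a) / 2) < \<epsilon> \<and> m \<ge> mbar) sequentially"
      using g_ev_lt[OF h] eventually_ge_at_top[of mbar] by eventually_elim auto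
    thus "eventually (\<lambda>m. \<beta>F m < a) sequentially"
    proof eventually_elim
      case (elim m)
      have "(bs + a) / 2 \<in> SF m" using elim bs(1) a by (simp add: SF_def feasF_iff)
      hence "\<beta>F m \<le> (bs + a) / 2" by (rule \<beta>F_le)
      thus ?case using a by simp
    qed
  next
    fix a assume a: "a < bs"
    define B where "B = max 0 ((a + bs) / 2)"
    have B: "0 \<le> B" "B < bs" "a < B \<or> a < 0" using a bs0 by (auto simp: B_def)
    have "eventually (\<lambda>m. g m B > \<epsilon> \<and> m \<ge> mbar) sequentially"
      using g_ev_gt[OF B(1,2)] eventually_ge_at_top[of mbar] by eventually_elim auto
    thus "eventually (\<lambda>m. a < \<beta>F m) sequentially"
    proof eventually_elim
      case (elim m)
      have m1: "m > 0" using mbar[of m] elim by simp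
      have "\<forall>b\<in>SF m. B \<le> b"
      proof
        fix b assume "b \<in> SF m"
        hence b: "b \<ge> 0" "g m b \<le> \<epsilon>" by (auto simp: SF_def feasF_iff)
        show "B \<le> b"
        proof (rule ccontr)
          assume "\<not> B \<le> b"
          hence "b \<le> B" by simp
          hence bB: "b \<le> B" .
          have "g m B \<le> g m b" unfolding g_def
          proof (rule g_antimono)
            show "\<And>k. k \<in> {1..K} \<Longrightarrow> 0 < \<Lambda>0 k" by (rule Lp)
            show "\<And>k. k \<in> {1..K} \<Longrightarrow> 0 < p k" by (rule p_pos)
          qed (use i_range m1 bB in auto)
          thus False using b elim by simp
        qed
      qed
      hence "B \<le> \<beta>F m" "0 \<le> \<beta>F m"
        using SF_ne[of m] elim B unfolding \<beta>F_def by (auto intro!: cInf_greatest simp: SF_def feasF_iff)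
      thus ?case using B(3) by auto
    qed
  qed
  show ?thesis
  proof (intro exI[of _ mbar] conjI allI impI)
    fix m assume "m \<ge> mbar"
    thus "i \<in> Wset K p \<Lambda>0 cbar \<epsilon> m" using optF by (auto simp: Wset_def)
  next
    show "\<exists>\<beta>G \<beta>F :: nat \<Rightarrow> real. \<exists>\<beta>star > 0.
              (\<forall>m\<ge>mbar. optG K p \<Lambda>0 cbar \<epsilon> i m (\<beta>G m)) \<and>
              (\<forall>m\<ge>mbar. optF K p \<Lambda>0 cbar \<epsilon> m (\<beta>F m) i) \<and>
              \<beta>G \<longlonglongrightarrow> \<beta>star \<and> \<beta>F \<longlonglongrightarrow> \<beta>star"
      using optG optF \<beta>G_lim \<beta>F_lim bs0 by blast
  qed
qed


end
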